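(* Consider the two-dimensional risk model with constant interest rate described in the context (with $c_1/\delta_1>c_2/\delta_2$). For $T>0$ and $x_1,x_2$, let $$\Psi_{\max}(x_1,x_2,T)=P\{T_{\max}(\delta_1x_1,\delta_2x_2)\le T\}=P\{\exists\,t\le T:\ X_1(t)<0\text{ and }X_2(t)<0\},$$ where $X_i(t)=x_i+p_i(1-e^{-rt})-\sum_{k=1}^{N(t)}e^{-r\theta_k}\sigma_k$ and $p_i=\frac{c_i}{r\delta_i}$. Let $V$ be uniformly distributed on $(0,T]$, independent of $\sigma_1$, and $F_T(x)=P\{e^{-rV}\sigma_1\le x\}$, $\overline{F_T}=1-F_T$. Suppose $P\{\sigma_k>x\}=L(x)/x^{\alpha}$, where $\alpha>0$ and $L$ is continuous, slowly varying, with $\lim_{x\to\infty}L(x)=\infty$. Then for any $T>0$, $$\lim_{x_2\ge x_1\to\infty}\frac{\Psi_{\max}(x_1,x_2,T)}{\lambda T\,\overline{F_T}(x_2)}=1,$$ the limit being taken as $x_1\to\infty$ over pairs with $x_2\ge x_1$.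
   Context: Model: $U_i(t)=e^{rt}u_i+\frac{c_i}{r}(e^{rt}-1)-\delta_i\sum_{k=1}^{N(t)}e^{r(t-\theta_k)}\sigma_k$, $i=1,2$, where $r>0$ is the interest rate, $u_i$ initial reserves, $c_i>0$ premium rates, $0<\delta_1,\delta_2<1$ with $\delta_1+\delta_2=1$, $N(t)$ a Poisson process with intensity $\lambda>0$, $\{\sigma_k\}$ i.i.d. nonnegative claim sizes independent of $N$, and $\theta_k$ the $k$-th arrival time of $N$. $T_{\max}(u_1,u_2)=\inf\{t\ge0:\max\{U_1(t),U_2(t)\}<0\}$. Standing assumption $c_1/\delta_1>c_2/\delta_2$, i.e. $p_1>p_2$. Note $X_i(t)=e^{-rt}U_i(t)/\delta_i$ with $x_i=u_i/\delta_i$. *)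

theory Defs
  imports "HOL-Probability.Probability"
begin

text \<open>Arrival times of the Poisson process built from inter-arrival times W:
  index k :: nat corresponds to the (k+1)-th claim, theta k = W 0 + ... + W k.\<close>
definition arrival :: "(nat \<Rightarrow> 'a \<Rightarrow> real) \<Rightarrow> nat \<Rightarrow> 'a \<Rightarrow> real" where
  "arrival W k \<omega> = (\<Sum>i\<le>k. W i \<omega>)"

definition count_proc :: "(nat \<Rightarrow> 'a \<Rightarrow> real) \<Rightarrow> real \<Rightarrow> 'a \<Rightarrow> nat" where
  "count_proc W t \<omega> = card {k. arrival W k \<omega> \<le> t}"

definition Xproc :: "real \<Rightarrow> real \<Rightarrow> real \<Rightarrow> (nat \<Rightarrow> 'a \<Rightarrow> real) \<Rightarrow> (nat \<Rightarrow> 'a \<Rightarrow> real)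
    \<Rightarrow> real \<Rightarrow> 'a \<Rightarrow> real" where
  "Xproc r p x W \<sigma> t \<omega> =
     x + p * (1 - exp (- r * t))
       - (\<Sum>k<count_proc W t \<omega>. exp (- r * arrival W k \<omega>) * \<sigma> k \<omega>)"

definition Psi_max :: "'a measure \<Rightarrow> real \<Rightarrow> real \<Rightarrow> real \<Rightarrow> (nat \<Rightarrow> 'a \<Rightarrow> real)
    \<Rightarrow> (nat \<Rightarrow> 'a \<Rightarrow> real) \<Rightarrow> real \<Rightarrow> real \<Rightarrow> real \<Rightarrow> real" where
  "Psi_max M r p1 p2 W \<sigma> x1 x2 T =
     measure M {\<omega> \<in> space M. \<exists>t. 0 \<le> t \<and> t \<le> T \<and>
        Xproc r p1 x1 W \<sigma> t \<omega> < 0 \<and> Xproc r p2 x2 W \<sigma> t \<omega> < 0}"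

definition slowly_varying :: "(real \<Rightarrow> real) \<Rightarrow> bool" where
  "slowly_varying L \<longleftrightarrow> (\<forall>\<^sub>F x in at_top. L x > 0) \<and>
     (\<forall>c>0. ((\<lambda>x. L (c * x) / L x) \<longlongrightarrow> 1) at_top)"

end

theory Submission
  imports Defs
begin


locale rmodel = prob_space M for M :: "'a measure" +
  fixes W \<sigma> :: "nat \<Rightarrow> 'a \<Rightarrow> real"
    and V :: "'a \<Rightarrow> real"
    and r c1 c2 \<delta>1 \<delta>2 lam T \<alpha> :: real
    and L :: "real \<Rightarrow> real"
  assumes r: "r > 0" and c: "c1 > 0" "c2 > 0"
    and \<delta>: "0 < \<delta>1" "\<delta>1 < 1" "0 < \<delta>2" "\<delta>2 < 1" "\<delta>1 + \<delta>2 = 1"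
    and p_order: "c1 / \<delta>1 > c2 / \<delta>2"
    and lam: "lam > 0"
    and T: "T > 0"
    and indep: "indep_vars (\<lambda>_. borel)
                  (\<lambda>j. case j of Inl k \<Rightarrow> W k | Inr k \<Rightarrow> \<sigma> k) UNIV"
    and W_exp: "\<And>k. distributed M lborel (W k) (exponential_density lam)"
    and \<sigma>_meas: "\<And>k. \<sigma> k \<in> borel_measurable M"
    and \<sigma>_nonneg: "\<And>k \<omega>. \<omega> \<in> space M \<Longrightarrow> \<sigma> k \<omega> \<ge> 0"
    and alpha: "\<alpha> > 0"
    and L_sv: "slowly_varying L"
    and L_inf: "filterlim L at_top at_top"
    and tail: "\<And>k x. x > 0 \<Longrightarrow>
                 measure M {\<omega> \<in> space M. \<sigma> k \<omega> > x} = L x / x powr \<alpha>"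
    and V_unif: "distr M borel V = uniform_measure lborel {0<..T}"
    and V_meas: "V \<in> borel_measurable M"
    and V_indep: "indep_var borel V borel (\<sigma> 0)"
begin

definition "Z = (\<lambda>j. case j of Inl k \<Rightarrow> W k | Inr k \<Rightarrow> \<sigma> k)"
definition "\<theta> k = arrival W k"
definition "F x = measure M {\<omega> \<in> space M. \<sigma> 0 \<omega> > x}"

lemma W_meas[measurable]: "W k \<in> borel_measurable M"
  using distributed_measurable[OF W_exp[of k]] by simp

lemma \<sigma>_meas'[measurable]: "\<sigma> k \<in> borel_measurable M" by (rule \<sigma>_meas)

lemma \<theta>_meas[measurable]: "\<theta> k \<in> borel_measurable M"
  unfolding \<theta>_def arrival_def by measurable

lemma Z_indep: "indep_vars (\<lambda>_. borel) Z UNIV"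
  using indep unfolding Z_def .

lemma indep_blocks:
  assumes "disjoint_family_on K I"
    and "\<And>l. l \<in> I \<Longrightarrow> g l \<in> borel_measurable (PiM (K l) (\<lambda>_. borel))"
  shows "indep_vars (\<lambda>_. borel) (\<lambda>l \<omega>. g l (restrict (\<lambda>i. Z i \<omega>) (K l))) I"
  using indep_vars_compose2[OF indep_vars_restrict[OF Z_indep _ assms(1)], of g "\<lambda>_. borel"] assms(2)
  by auto

lemma indep2:
  assumes "A \<inter> B = {}"
    and "g1 \<in> borel_measurable (PiM A (\<lambda>_. borel))"
    and "g2 \<in> borel_measurable (PiM B (\<lambda>_. borel))"
  shows "indep_var borel (\<lambda>\<omega>. g1 (restrict (\<lambda>i. Z i \<omega>) A)) borel (\<lambda>\<omega>. g2 (restrict (\<lambda>i. Z i \<omega>) B))"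
  using indep_var_compose[OF indep_var_restrict[OF Z_indep assms(1)] assms(2,3)]
  by (simp add: comp_def)

end


context rmodel begin

lemma W_indep: "indep_vars (\<lambda>_. borel) W UNIV"
proof -
  have "indep_vars (\<lambda>_. borel) (\<lambda>l \<omega>. (\<lambda>f. f (Inl l)) (restrict (\<lambda>i. Z i \<omega>) {Inl l})) UNIV"
    by (rule indep_blocks) (auto simp: disjoint_family_on_def intro!: measurable_component_singleton)
  then show ?thesis
    by (rule indep_vars_cong[THEN iffD1, rotated -1]) (auto simp: Z_def)
qed

lemma W_nonneg_AE: "AE \<omega> in M. 0 \<le> W k \<omega>"
proof -
  have "emeasure M (W k -` {..<0} \<inter> space M) = (\<integral>\<^sup>+ x. ennreal (exponential_density lam x) * indicator {..<0} x \<partial>lborel)"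
    by (rule distributed_emeasure[OF W_exp]) auto
  also have "\<dots> = (\<integral>\<^sup>+ x. 0 \<partial>(lborel::real measure))"
    by (rule nn_integral_cong) (auto simp: exponential_density_def erlang_density_def split: split_indicator)
  finally have "emeasure M (W k -` {..<0} \<inter> space M) = 0" by simp
  moreover have "W k -` {..<0} \<inter> space M = {\<omega> \<in> space M. \<not> 0 \<le> W k \<omega>}" by auto
  ultimately have "{\<omega> \<in> space M. \<not> 0 \<le> W k \<omega>} \<in> null_sets M"
    by (auto intro!: null_setsI)
  then show ?thesis by (rule AE_I') auto
qed

lemma W_le: "0 \<le> a \<Longrightarrow> prob {\<omega> \<in> space M. W k \<omega> \<le> a} = 1 - exp (- a * lam)"
  using exponential_distributedD_le[OF W_exp[of k] _ lam] by simp

lemma \<theta>_le: assumes a: "0 \<le> a"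
  shows "prob {\<omega> \<in> space M. \<theta> k \<omega> \<le> a} \<le> (1 - exp (- a * lam)) ^ Suc k"
proof -
  have AEall: "AE \<omega> in M. \<forall>i. 0 \<le> W i \<omega>"
    using W_nonneg_AE by (simp add: AE_all_countable)
  have "prob {\<omega> \<in> space M. \<theta> k \<omega> \<le> a} \<le> prob (\<Inter>i\<in>{..k}. W i -` {..a} \<inter> space M)"
  proof (rule finite_measure_mono_AE)
    show "AE x\<in>{\<omega> \<in> space M. \<theta> k \<omega> \<le> a} in M. x \<in> (\<Inter>i\<in>{..k}. W i -` {..a} \<inter> space M)"
      using AEall
    proof eventually_elim
      case (elim \<omega>)
      { fix i assume i: "i \<le> k" and le: "\<theta> k \<omega> \<le> a"
        have "W i \<omega> \<le> (\<Sum>j\<le>k. W j \<omega>)"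
          using i elim by (intro member_le_sum) auto
        with le have "W i \<omega> \<le> a" by (simp add: \<theta>_def arrival_def) }
      then show ?case by auto
    qed
  qed measurable
  also have "\<dots> = (\<Prod>i\<in>{..k}. prob (W i -` {..a} \<inter> space M))"
    by (rule indep_varsD[OF W_indep]) auto
  also have "\<dots> = (\<Prod>i\<in>{..k}. 1 - exp (- a * lam))"
  proof (intro prod.cong refl)
    fix i show "prob (W i -` {..a} \<inter> space M) = 1 - exp (- a * lam)"
      using W_le[OF a, of i] by (simp add: vimage_def Int_def conj_commute)
  qed
  finally show ?thesis by simp
qed

lemma \<theta>_erlang: "distributed M lborel (\<theta> k) (erlang_density k lam)"
proof -
  have "distributed M lborel (\<lambda>x. \<Sum>i\<in>{..k}. W i x) (erlang_density (card {..k} - 1) lam)"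
    by (rule exponential_distributed_sum[OF _ _ lam W_exp indep_vars_subset[OF W_indep]]) auto
  then show ?thesis by (simp add: \<theta>_def[abs_def] arrival_def[abs_def])
qed

definition "good \<omega> \<longleftrightarrow> (\<forall>k. 0 \<le> W k \<omega>) \<and> (\<forall>m::nat. \<exists>k. \<theta> k \<omega> > m)"

lemma good_AE: "AE \<omega> in M. good \<omega>"
proof -
  have 1: "AE \<omega> in M. \<forall>i. 0 \<le> W i \<omega>"
    using W_nonneg_AE by (simp add: AE_all_countable)
  have 2: "AE \<omega> in M. \<exists>k. \<theta> k \<omega> > real m" for m :: nat
  proof -
    let ?b = "1 - exp (- real m * lam)"
    have b: "0 \<le> ?b" "?b < 1" using lam by auto
    let ?S = "{\<omega> \<in> space M. \<forall>k. \<theta> k \<omega> \<le> real m}"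
    have S: "?S \<in> sets M" by measurable
    have le: "prob ?S \<le> ?b ^ Suc k" for k
    proof -
      have "prob ?S \<le> prob {\<omega> \<in> space M. \<theta> k \<omega> \<le> real m}"
        by (rule finite_measure_mono) auto
      also have "\<dots> \<le> ?b ^ Suc k" by (rule \<theta>_le) auto
      finally show ?thesis .
    qed
    have "prob ?S = 0"
    proof (rule ccontr)
      assume "prob ?S \<noteq> 0"
      then have "prob ?S > 0" by (simp add: zero_less_measure_iff)
      from real_arch_pow_inv[OF this b(2)] obtain n where "?b ^ n < prob ?S" by auto
      moreover have "?b ^ n \<ge> ?b ^ Suc n" using b by (intro power_decreasing) auto
      ultimately show False using le[of n] by linarith
    qed
    then have "?S \<in> null_sets M" using S by (intro null_setsI) (auto simp: emeasure_eq_measure)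
    then show ?thesis by (rule AE_I') (auto simp: not_less)
  qed
  have "AE \<omega> in M. \<forall>m::nat. \<exists>k. \<theta> k \<omega> > real m"
    using 2 by (simp add: AE_all_countable)
  with 1 show ?thesis unfolding good_def by eventually_elim auto
qed

end


context rmodel begin

lemma arrival_\<theta>: "arrival W k \<omega> = \<theta> k \<omega>" by (simp add: \<theta>_def)

lemma good_mono: "good \<omega> \<Longrightarrow> j \<le> k \<Longrightarrow> \<theta> j \<omega> \<le> \<theta> k \<omega>"
  unfolding good_def \<theta>_def arrival_def
  by (intro sum_mono2) auto

lemma good_nonneg: "good \<omega> \<Longrightarrow> 0 \<le> \<theta> k \<omega>"
  unfolding good_def \<theta>_def arrival_def by (intro sum_nonneg) auto

lemma good_count:
  assumes g: "good \<omega>"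
  shows "k < count_proc W t \<omega> \<longleftrightarrow> \<theta> k \<omega> \<le> t"
proof -
  obtain m :: nat where m: "t < m" using reals_Archimedean2 by blast
  from g obtain k0 where k0: "\<theta> k0 \<omega> > m" unfolding good_def by blast
  define n where "n = (LEAST k. \<theta> k \<omega> > t)"
  have n1: "\<theta> n \<omega> > t" unfolding n_def by (rule LeastI[of _ k0]) (use k0 m in auto)
  have n2: "k < n \<Longrightarrow> \<theta> k \<omega> \<le> t" for k unfolding n_def using not_less_Least by fastforce
  have set: "{k. \<theta> k \<omega> \<le> t} = {..<n}"
  proof (auto simp: n2)
    fix k assume "\<theta> k \<omega> \<le> t" show "k < n"
    proof (rule ccontr)
      assume "\<not> k < n" then have "\<theta> n \<omega> \<le> \<theta> k \<omega>" using good_mono[OF g] by auto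
      with n1 \<open>\<theta> k \<omega> \<le> t\<close> show False by auto
    qed
  qed
  have "count_proc W t \<omega> = n" unfolding count_proc_def arrival_\<theta> set by simp
  then show ?thesis using set by auto
qed

lemma count_proc_meas[measurable]:
  assumes [measurable]: "f \<in> borel_measurable M"
  shows "(\<lambda>\<omega>. count_proc W (f \<omega>) \<omega>) \<in> measurable M (count_space UNIV)"
  unfolding count_proc_def arrival_\<theta> by measurable

lemma Xproc_meas[measurable]:
  assumes [measurable]: "f \<in> borel_measurable M"
  shows "(\<lambda>\<omega>. Xproc r p x W \<sigma> (f \<omega>) \<omega>) \<in> borel_measurable M"
proof -
  have "(\<lambda>\<omega>. (\<lambda>n \<omega>. \<Sum>k<n. exp (- r * \<theta> k \<omega>) * \<sigma> k \<omega>) (count_proc W (f \<omega>) \<omega>) \<omega>) \<in> borel_measurable M"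
    by (rule measurable_compose_countable[OF _ count_proc_meas]) measurable
  then show ?thesis unfolding Xproc_def arrival_\<theta> by measurable
qed

definition "ruinQ x1 x2 t \<omega> \<longleftrightarrow> Xproc r (c1 / (r * \<delta>1)) x1 W \<sigma> t \<omega> < 0 \<and> Xproc r (c2 / (r * \<delta>2)) x2 W \<sigma> t \<omega> < 0"

definition "Rset x1 x2 = {\<omega> \<in> space M. \<exists>t. 0 \<le> t \<and> t \<le> T \<and> ruinQ x1 x2 t \<omega>}"

lemma p_pos: "c1 / (r * \<delta>1) > 0" "c2 / (r * \<delta>2) > 0"
  using r c \<delta> by auto

lemma Xproc_zero_count:
  assumes "count_proc W t \<omega> = 0" "0 \<le> t" "x > 0" "p \<ge> 0"
  shows "Xproc r p x W \<sigma> t \<omega> > 0"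
proof -
  have "exp (- r * t) \<le> 1" using r assms by auto
  then have "p * (1 - exp (- r * t)) \<ge> 0" using assms by auto
  then show ?thesis using assms unfolding Xproc_def by simp
qed

lemma Rset_eq:
  assumes x: "x1 > 0" "x2 > 0"
  shows "Rset x1 x2 = {\<omega> \<in> space M. ruinQ x1 x2 0 \<omega>} \<union>
     (\<Union>k. {\<omega> \<in> space M. 0 \<le> \<theta> k \<omega> \<and> \<theta> k \<omega> \<le> T \<and> ruinQ x1 x2 (\<theta> k \<omega>) \<omega>})"
proof (rule antisym)
  show "{\<omega> \<in> space M. ruinQ x1 x2 0 \<omega>} \<union>
     (\<Union>k. {\<omega> \<in> space M. 0 \<le> \<theta> k \<omega> \<and> \<theta> k \<omega> \<le> T \<and> ruinQ x1 x2 (\<theta> k \<omega>) \<omega>}) \<subseteq> Rset x1 x2"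
    unfolding Rset_def using T by auto
next
  show "Rset x1 x2 \<subseteq> {\<omega> \<in> space M. ruinQ x1 x2 0 \<omega>} \<union>
     (\<Union>k. {\<omega> \<in> space M. 0 \<le> \<theta> k \<omega> \<and> \<theta> k \<omega> \<le> T \<and> ruinQ x1 x2 (\<theta> k \<omega>) \<omega>})"
  proof
    fix \<omega> assume "\<omega> \<in> Rset x1 x2"
    then obtain t where \<omega>: "\<omega> \<in> space M" and t: "0 \<le> t" "t \<le> T" and Q: "ruinQ x1 x2 t \<omega>"
      unfolding Rset_def by auto
    define S where "S = {k. \<theta> k \<omega> \<le> t}"
    have cnt: "count_proc W t \<omega> = card S" unfolding S_def count_proc_def arrival_\<theta> ..
    have "card S \<noteq> 0"
    proof
      assume "card S = 0"
      then have "Xproc r (c1 / (r * \<delta>1)) x1 W \<sigma> t \<omega> > 0"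
        using cnt t x p_pos by (intro Xproc_zero_count) auto
      with Q show False unfolding ruinQ_def by auto
    qed
    then have fin: "finite S" "S \<noteq> {}" using card.infinite by fastforce+
    define s where "s = Max ((\<lambda>k. \<theta> k \<omega>) ` S)"
    have s_in: "s \<in> (\<lambda>k. \<theta> k \<omega>) ` S" unfolding s_def using fin by (intro Max_in) auto
    have s_ge: "k \<in> S \<Longrightarrow> \<theta> k \<omega> \<le> s" for k unfolding s_def using fin by (intro Max_ge) auto
    have s_le: "s \<le> t" using s_in S_def by auto
    have Sset: "u \<ge> s \<Longrightarrow> u \<le> t \<Longrightarrow> {k. \<theta> k \<omega> \<le> u} = S" for u
      using s_ge unfolding S_def by force
    have mono: "ruinQ x1 x2 u \<omega>" if "u \<ge> s" "u \<le> t" "0 \<le> u" for u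
    proof -
      have cu: "count_proc W u \<omega> = count_proc W t \<omega>"
        unfolding count_proc_def arrival_\<theta> Sset[OF that(1,2)] cnt[unfolded count_proc_def arrival_\<theta>] ..
      have e: "exp (- r * t) \<le> exp (- r * u)" using r that by auto
      have "p * (1 - exp (- r * u)) \<le> p * (1 - exp (- r * t))" if "p > 0" for p
        using e that by (intro mult_left_mono) auto
      with Q p_pos show ?thesis unfolding ruinQ_def Xproc_def cu by (smt (verit))
    qed
    show "\<omega> \<in> {\<omega> \<in> space M. ruinQ x1 x2 0 \<omega>} \<union>
     (\<Union>k. {\<omega> \<in> space M. 0 \<le> \<theta> k \<omega> \<and> \<theta> k \<omega> \<le> T \<and> ruinQ x1 x2 (\<theta> k \<omega>) \<omega>})"
    proof (cases "s \<ge> 0")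
      case True
      from s_in obtain k where "s = \<theta> k \<omega>" by auto
      with True mono[of s] s_le t \<omega> show ?thesis by auto
    next
      case False
      with mono[of 0] t \<omega> show ?thesis by auto
    qed
  qed
qed

lemma Rset_meas:
  assumes x: "x1 > 0" "x2 > 0"
  shows "Rset x1 x2 \<in> sets M"
  unfolding Rset_eq[OF x] ruinQ_def by measurable

end


context rmodel begin

lemma F_antimono: "a \<le> b \<Longrightarrow> F b \<le> F a"
  unfolding F_def by (intro finite_measure_mono) auto

lemma F_meas[measurable]: "F \<in> borel_measurable borel"
proof -
  have "(\<lambda>x. - F x) \<in> borel_measurable borel"
    by (rule borel_measurable_mono) (auto simp: mono_def F_antimono)
  then have "(\<lambda>x. - (- F x)) \<in> borel_measurable borel" by measurable
  then show ?thesis by simp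
qed

lemma F_nonneg: "0 \<le> F y" unfolding F_def by simp
lemma F_le1: "F y \<le> 1" unfolding F_def by simp

lemma Fk: "y > 0 \<Longrightarrow> measure M {\<omega> \<in> space M. \<sigma> k \<omega> > y} = F y"
  unfolding F_def using tail[of y k] tail[of y 0] by simp

lemma emeasure_\<sigma>: "y > 0 \<Longrightarrow> emeasure M {\<omega> \<in> space M. \<sigma> k \<omega> > y} = ennreal (F y)"
  using Fk[of y k] by (simp add: emeasure_eq_measure)

lemma indep_pair_emeasure:
  fixes X Y :: "'a \<Rightarrow> real" and P :: "real \<times> real \<Rightarrow> bool"
  assumes ind: "indep_var borel X borel Y" and P[measurable]: "Measurable.pred (borel \<Otimes>\<^sub>M borel) P"
  shows "emeasure M {\<omega> \<in> space M. P (X \<omega>, Y \<omega>)} =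
         (\<integral>\<^sup>+ t. emeasure M {\<omega> \<in> space M. P (t, Y \<omega>)} \<partial>(distr M borel X))"
proof -
  from ind[unfolded indep_var_distribution_eq]
  have X[measurable]: "X \<in> borel_measurable M" and Y[measurable]: "Y \<in> borel_measurable M"
    and eq: "distr M borel X \<Otimes>\<^sub>M distr M borel Y = distr M (borel \<Otimes>\<^sub>M borel) (\<lambda>x. (X x, Y x))"
    by auto
  interpret PY: prob_space "distr M borel Y" by (rule prob_space_distr) simp
  let ?A = "{x \<in> space (borel \<Otimes>\<^sub>M borel). P x}"
  have A: "?A \<in> sets (borel \<Otimes>\<^sub>M borel)" using P unfolding pred_def .
  have "emeasure M {\<omega> \<in> space M. P (X \<omega>, Y \<omega>)} = emeasure (distr M (borel \<Otimes>\<^sub>M borel) (\<lambda>x. (X x, Y x))) ?A"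
  proof -
    have "(\<lambda>x. (X x, Y x)) -` ?A \<inter> space M = {\<omega> \<in> space M. P (X \<omega>, Y \<omega>)}"
      by (auto simp: space_pair_measure)
    moreover have "emeasure (distr M (borel \<Otimes>\<^sub>M borel) (\<lambda>x. (X x, Y x))) ?A = emeasure M ((\<lambda>x. (X x, Y x)) -` ?A \<inter> space M)"
      by (rule emeasure_distr[OF _ A]) measurable
    ultimately show ?thesis by simp
  qed
  also have "\<dots> = emeasure (distr M borel X \<Otimes>\<^sub>M distr M borel Y) ?A" by (simp add: eq)
  also have "\<dots> = (\<integral>\<^sup>+ t. emeasure (distr M borel Y) (Pair t -` ?A) \<partial>(distr M borel X))"
    by (rule PY.emeasure_pair_measure_alt, subst sets_pair_measure_cong[OF sets_distr sets_distr], rule A)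
  also have "\<dots> = (\<integral>\<^sup>+ t. emeasure M {\<omega> \<in> space M. P (t, Y \<omega>)} \<partial>(distr M borel X))"
  proof (intro nn_integral_cong)
    fix t :: real
    have "Pair t -` ?A = {s. P (t, s)}" by (auto simp: space_pair_measure)
    moreover have "{s. P (t, s)} \<in> sets borel"
    proof -
      have "Measurable.pred borel (\<lambda>s. P (t, s))" by measurable
      then show ?thesis by (simp add: pred_def)
    qed
    ultimately show "emeasure (distr M borel Y) (Pair t -` ?A) = emeasure M {\<omega> \<in> space M. P (t, Y \<omega>)}"
      by (subst emeasure_distr) (auto intro!: arg_cong[where f="emeasure M"])
  qed
  finally show ?thesis .
qed

definition "Ie y = (\<integral>\<^sup>+ t. ennreal (F (y * exp (r * t))) * indicator {0..T} t \<partial>lborel)"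

lemma D_formula:
  assumes y: "y > 0"
  shows "emeasure M {\<omega> \<in> space M. exp (- r * V \<omega>) * \<sigma> 0 \<omega> > y} = Ie y / ennreal T"
proof -
  have P: "Measurable.pred (borel \<Otimes>\<^sub>M borel) (\<lambda>x::real\<times>real. exp (- r * fst x) * snd x > y)"
    by measurable
  have "emeasure M {\<omega> \<in> space M. exp (- r * V \<omega>) * \<sigma> 0 \<omega> > y} =
        (\<integral>\<^sup>+ t. emeasure M {\<omega> \<in> space M. exp (- r * t) * \<sigma> 0 \<omega> > y} \<partial>(distr M borel V))"
    using indep_pair_emeasure[OF V_indep P] by simp
  also have "\<dots> = (\<integral>\<^sup>+ t. ennreal (F (y * exp (r * t))) \<partial>(distr M borel V))"
  proof (intro nn_integral_cong)
    fix t
    have "{\<omega> \<in> space M. exp (- r * t) * \<sigma> 0 \<omega> > y} = {\<omega> \<in> space M. \<sigma> 0 \<omega> > y * exp (r * t)}"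
      by (auto simp: exp_minus field_simps)
    then show "emeasure M {\<omega> \<in> space M. exp (- r * t) * \<sigma> 0 \<omega> > y} = ennreal (F (y * exp (r * t)))"
      using emeasure_\<sigma>[of "y * exp (r * t)" 0] y by simp
  qed
  also have "\<dots> = (\<integral>\<^sup>+ t. ennreal (F (y * exp (r * t))) * indicator {0<..T} t \<partial>lborel) / emeasure lborel {0<..T}"
    unfolding V_unif by (rule nn_integral_uniform_measure) auto
  also have "(\<integral>\<^sup>+ t. ennreal (F (y * exp (r * t))) * indicator {0<..T} t \<partial>lborel) = Ie y"
    unfolding Ie_def
    by (intro nn_integral_cong_AE) (use AE_lborel_singleton[of 0] in \<open>eventually_elim, simp split: split_indicator\<close>)
  finally show ?thesis using T by simp
qed

lemma \<theta>\<sigma>_indep: "indep_var borel (\<theta> k) borel (\<sigma> j)"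
proof -
  have "indep_var borel (\<lambda>\<omega>. (\<lambda>f. \<Sum>i\<le>k. f (Inl i)) (restrict (\<lambda>i. Z i \<omega>) (Inl ` {..k})))
          borel (\<lambda>\<omega>. (\<lambda>f. f (Inr j)) (restrict (\<lambda>i. Z i \<omega>) {Inr j}))"
    by (rule indep2) (auto intro!: borel_measurable_sum measurable_component_singleton)
  then show ?thesis by (simp add: Z_def \<theta>_def arrival_def[abs_def])
qed

lemma Sk_formula:
  assumes y: "y > 0"
  shows "emeasure M {\<omega> \<in> space M. \<theta> k \<omega> \<le> T \<and> exp (- r * \<theta> k \<omega>) * \<sigma> k \<omega> > y} =
    (\<integral>\<^sup>+ t. ennreal (erlang_density k lam t) * (ennreal (F (y * exp (r * t))) * indicator {..T} t) \<partial>lborel)"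
proof -
  have P: "Measurable.pred (borel \<Otimes>\<^sub>M borel) (\<lambda>x::real\<times>real. fst x \<le> T \<and> exp (- r * fst x) * snd x > y)"
    by measurable
  have "emeasure M {\<omega> \<in> space M. \<theta> k \<omega> \<le> T \<and> exp (- r * \<theta> k \<omega>) * \<sigma> k \<omega> > y} =
        (\<integral>\<^sup>+ t. emeasure M {\<omega> \<in> space M. t \<le> T \<and> exp (- r * t) * \<sigma> k \<omega> > y} \<partial>(distr M borel (\<theta> k)))"
    using indep_pair_emeasure[OF \<theta>\<sigma>_indep P] by simp
  also have "\<dots> = (\<integral>\<^sup>+ t. ennreal (F (y * exp (r * t))) * indicator {..T} t \<partial>(distr M borel (\<theta> k)))"
  proof (intro nn_integral_cong)
    fix t
    have "{\<omega> \<in> space M. t \<le> T \<and> exp (- r * t) * \<sigma> k \<omega> > y} = (if t \<le> T then {\<omega> \<in> space M. \<sigma> k \<omega> > y * exp (r * t)} else {})"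
      by (auto simp: exp_minus field_simps)
    then show "emeasure M {\<omega> \<in> space M. t \<le> T \<and> exp (- r * t) * \<sigma> k \<omega> > y} = ennreal (F (y * exp (r * t))) * indicator {..T} t"
      using emeasure_\<sigma>[of "y * exp (r * t)" k] y by (simp split: split_indicator)
  qed
  also have "distr M borel (\<theta> k) = density lborel (erlang_density k lam)"
    using distributed_distr_eq_density[OF \<theta>_erlang[of k]]
    by (metis distr_cong sets_lborel space_lborel space_borel)
  also have "(\<integral>\<^sup>+ t. ennreal (F (y * exp (r * t))) * indicator {..T} t \<partial>density lborel (erlang_density k lam)) =
    (\<integral>\<^sup>+ t. ennreal (erlang_density k lam t) * (ennreal (F (y * exp (r * t))) * indicator {..T} t) \<partial>lborel)"
    by (subst nn_integral_density) auto
  finally show ?thesis .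
qed

lemma erlang_sum: "(\<Sum>k. ennreal (erlang_density k lam t)) = ennreal lam * indicator {0..} t"
proof (cases "t < 0")
  case True then show ?thesis by (simp add: erlang_density_def)
next
  case False
  have "(\<lambda>k. (lam * exp (- lam * t)) * ((lam * t) ^ k /\<^sub>R fact k)) sums ((lam * exp (- lam * t)) * exp (lam * t))"
    by (intro sums_mult exp_converges)
  moreover have e1: "(lam * exp (- lam * t)) * exp (lam * t) = lam" by (simp add: exp_minus field_simps)
  moreover have e2: "(\<lambda>k. (lam * exp (- lam * t)) * ((lam * t) ^ k /\<^sub>R fact k)) = (\<lambda>k. erlang_density k lam t)"
    using False by (auto simp: erlang_density_def power_mult_distrib field_simps mult.commute)
  ultimately have s: "(\<lambda>k. erlang_density k lam t) sums lam" by metis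
  have "(\<Sum>k. ennreal (erlang_density k lam t)) = ennreal lam"
    by (rule suminf_ennreal_eq[OF _ s]) (use lam in auto)
  then show ?thesis using False by simp
qed

lemma S_formula:
  assumes y: "y > 0"
  shows "(\<Sum>k. emeasure M {\<omega> \<in> space M. \<theta> k \<omega> \<le> T \<and> exp (- r * \<theta> k \<omega>) * \<sigma> k \<omega> > y}) = ennreal lam * Ie y"
proof -
  have "(\<Sum>k. emeasure M {\<omega> \<in> space M. \<theta> k \<omega> \<le> T \<and> exp (- r * \<theta> k \<omega>) * \<sigma> k \<omega> > y}) =
    (\<Sum>k. \<integral>\<^sup>+ t. ennreal (erlang_density k lam t) * (ennreal (F (y * exp (r * t))) * indicator {..T} t) \<partial>lborel)"
    using Sk_formula[OF y] by simp
  also have "\<dots> = (\<integral>\<^sup>+ t. (\<Sum>k. ennreal (erlang_density k lam t) * (ennreal (F (y * exp (r * t))) * indicator {..T} t)) \<partial>lborel)"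
    by (rule nn_integral_suminf[symmetric]) measurable
  also have "\<dots> = (\<integral>\<^sup>+ t. ennreal lam * (ennreal (F (y * exp (r * t))) * indicator {0..T} t) \<partial>lborel)"
    by (intro nn_integral_cong) (simp add: ennreal_suminf_multc erlang_sum split: split_indicator)
  also have "\<dots> = ennreal lam * Ie y"
    unfolding Ie_def by (rule nn_integral_cmult) measurable
  finally show ?thesis .
qed

end


context rmodel begin

lemma Ie_mono_le:
  assumes "\<And>t. 0 \<le> t \<Longrightarrow> t \<le> T \<Longrightarrow> F (y * exp (r * t)) \<le> a * F (y' * exp (r * t))" "0 \<le> a"
  shows "Ie y \<le> ennreal a * Ie y'"
proof -
  have "Ie y \<le> (\<integral>\<^sup>+ t. ennreal a * (ennreal (F (y' * exp (r * t))) * indicator {0..T} t) \<partial>lborel)"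
    unfolding Ie_def using assms
    by (intro nn_integral_mono) (auto split: split_indicator simp: ennreal_mult'[symmetric] F_nonneg)
  also have "\<dots> = ennreal a * Ie y'" unfolding Ie_def by (rule nn_integral_cmult) measurable
  finally show ?thesis .
qed

lemma Ie_const: "(\<integral>\<^sup>+ t. ennreal a * indicator {0..T} t \<partial>lborel) = ennreal a * ennreal T"
  using T by (subst nn_integral_cmult_indicator) auto

lemma Ie_le: "Ie y \<le> ennreal T"
proof -
  have "Ie y \<le> (\<integral>\<^sup>+ t. ennreal 1 * indicator {0..T} t \<partial>lborel)"
    unfolding Ie_def by (intro nn_integral_mono) (auto split: split_indicator simp: F_le1)
  then show ?thesis using Ie_const[of 1] by simp
qed

lemma Ie_ge: assumes "0 \<le> y" shows "ennreal (F (y * exp (r * T))) * ennreal T \<le> Ie y"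
proof -
  have "(\<integral>\<^sup>+ t. ennreal (F (y * exp (r * T))) * indicator {0..T} t \<partial>lborel) \<le> Ie y"
    unfolding Ie_def using assms r
    by (intro nn_integral_mono) (auto split: split_indicator intro!: ennreal_leI F_antimono mult_left_mono)
  then show ?thesis using Ie_const by simp
qed

definition "I y = enn2real (Ie y)"

lemma Ie_I: "Ie y = ennreal (I y)"
  unfolding I_def using Ie_le[of y] by (simp add: ennreal_enn2real_if top_unique)
    (metis ennreal_enn2real ennreal_less_top order.not_eq_order_implies_strict order_le_less_trans top.not_eq_extremum)

lemma I_nonneg: "0 \<le> I y" unfolding I_def by simp

lemma I_le: "I y \<le> T" using Ie_le[of y] T unfolding Ie_I by simp

lemma I_ge: assumes "0 \<le> y" shows "F (y * exp (r * T)) * T \<le> I y"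
proof -
  have "ennreal (F (y * exp (r * T)) * T) \<le> ennreal (I y)"
    using Ie_ge[OF assms] T F_nonneg unfolding Ie_I by (simp add: ennreal_mult'[symmetric])
  then show ?thesis using I_nonneg[of y] by (simp add: ennreal_le_iff)
qed

lemma I_mono_le:
  assumes "\<And>t. 0 \<le> t \<Longrightarrow> t \<le> T \<Longrightarrow> F (y * exp (r * t)) \<le> a * F (y' * exp (r * t))" "0 \<le> a"
  shows "I y \<le> a * I y'"
  using Ie_mono_le[OF assms] assms(2) I_nonneg unfolding Ie_I by (simp add: ennreal_mult'[symmetric])

lemma I_antimono: "0 \<le> y \<Longrightarrow> y \<le> y' \<Longrightarrow> I y' \<le> I y"
proof -
  assume a: "0 \<le> y" "y \<le> y'"
  have "I y' \<le> 1 * I y"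
  proof (rule I_mono_le)
    fix t assume "0 \<le> t" "t \<le> T"
    show "F (y' * exp (r * t)) \<le> 1 * F (y * exp (r * t))"
      using a by (auto intro!: F_antimono mult_right_mono)
  qed simp
  then show ?thesis by simp
qed

lemma F_eq: "z > 0 \<Longrightarrow> F z = L z / z powr \<alpha>"
  using tail[of z 0] unfolding F_def by simp

lemma L_pos_ev: "\<forall>\<^sub>F z in at_top. L z > 0"
  using L_sv unfolding slowly_varying_def by auto

lemma F_ratio:
  assumes c: "c > 0"
  shows "((\<lambda>z. F (c * z) / F z) \<longlongrightarrow> c powr - \<alpha>) at_top"
proof -
  have lim: "((\<lambda>z. L (c * z) / L z * c powr - \<alpha>) \<longlongrightarrow> 1 * c powr - \<alpha>) at_top"
    using L_sv c unfolding slowly_varying_def by (intro tendsto_mult) auto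
  have "\<forall>\<^sub>F z in at_top. L (c * z) / L z * c powr - \<alpha> = F (c * z) / F z"
    using L_pos_ev eventually_gt_at_top[of 0]
  proof eventually_elim
    case (elim z)
    then have "c * z > 0" using c by auto
    then show ?case using elim c
      by (simp add: F_eq powr_mult powr_minus field_simps)
  qed
  with lim show ?thesis by (auto elim: Lim_transform_eventually)
qed

lemma F_pos_ev: "\<forall>\<^sub>F z in at_top. F z > 0"
  using L_pos_ev eventually_gt_at_top[of 0] by eventually_elim (simp add: F_eq)

lemma F_ratio_bounds:
  assumes c: "c > 0" and \<eta>: "\<eta> > 0"
  shows "\<exists>z0>0. \<forall>z\<ge>z0. F z > 0 \<and> F (c * z) \<le> (1 + \<eta>) * c powr - \<alpha> * F z \<and> (1 - \<eta>) * c powr - \<alpha> * F z \<le> F (c * z)"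
proof -
  have cp: "c powr - \<alpha> > 0" using c by simp
  have "\<forall>\<^sub>F z in at_top. dist (F (c * z) / F z) (c powr - \<alpha>) < \<eta> * c powr - \<alpha>"
    using F_ratio[OF c] \<eta> cp by (auto simp: tendsto_iff)
  then have "\<forall>\<^sub>F z in at_top. z > 0 \<and> F z > 0 \<and> F (c * z) \<le> (1 + \<eta>) * c powr - \<alpha> * F z \<and> (1 - \<eta>) * c powr - \<alpha> * F z \<le> F (c * z)"
    using F_pos_ev eventually_gt_at_top[of 0]
  proof eventually_elim
    case (elim z)
    then have "\<bar>F (c * z) / F z - c powr - \<alpha>\<bar> < \<eta> * c powr - \<alpha>" by (simp add: dist_real_def)
    then have "F (c * z) / F z \<le> (1 + \<eta>) * c powr - \<alpha>" "(1 - \<eta>) * c powr - \<alpha> \<le> F (c * z) / F z"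
      by (auto simp: algebra_simps)
    then show ?case using elim by (auto simp: field_simps)
  qed
  then obtain z0 where "\<forall>z\<ge>z0. z > 0 \<and> F z > 0 \<and> F (c * z) \<le> (1 + \<eta>) * c powr - \<alpha> * F z \<and> (1 - \<eta>) * c powr - \<alpha> * F z \<le> F (c * z)"
    by (auto simp: eventually_at_top_linorder)
  then show ?thesis by (intro exI[of _ "max z0 1"]) auto
qed

lemma I_ratio_bounds:
  assumes c: "c > 0" and \<eta>: "\<eta> > 0"
  shows "\<exists>z0>0. \<forall>y\<ge>z0. I (c * y) \<le> (1 + \<eta>) * c powr - \<alpha> * I y \<and> (1 - \<eta>) * c powr - \<alpha> * I y \<le> I (c * y)"
proof -
  obtain z0 where z0: "z0 > 0" and b: "\<And>z. z \<ge> z0 \<Longrightarrow> F z > 0 \<and> F (c * z) \<le> (1 + \<eta>) * c powr - \<alpha> * F z \<and> (1 - \<eta>) * c powr - \<alpha> * F z \<le> F (c * z)"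
    using F_ratio_bounds[OF c \<eta>] by blast
  have ge: "y \<ge> z0 \<Longrightarrow> 0 \<le> t \<Longrightarrow> y * exp (r * t) \<ge> z0" for y t
    using z0 r by (smt (verit) mult_le_cancel_left1 one_le_exp_iff zero_le_mult_iff)
  show ?thesis
  proof (intro exI[of _ z0] conjI allI impI z0)
    fix y assume y: "y \<ge> z0"
    show "I (c * y) \<le> (1 + \<eta>) * c powr - \<alpha> * I y"
      by (rule I_mono_le) (use b ge y \<eta> in \<open>auto simp: mult.assoc\<close>)
    show "(1 - \<eta>) * c powr - \<alpha> * I y \<le> I (c * y)"
    proof (cases "\<eta> \<le> 1")
      case True
      have "I y \<le> (1 / ((1 - \<eta>) * c powr - \<alpha>)) * I (c * y)" if "\<eta> < 1"
      proof (rule I_mono_le)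
        fix t assume "0 \<le> t" "t \<le> T"
        then have "(1 - \<eta>) * c powr - \<alpha> * F (y * exp (r * t)) \<le> F (c * (y * exp (r * t)))"
          using b ge y by blast
        then show "F (y * exp (r * t)) \<le> 1 / ((1 - \<eta>) * c powr - \<alpha>) * F (c * y * exp (r * t))"
          using that c by (simp add: field_simps mult.assoc)
      qed (use that c in auto)
      then show ?thesis using True c I_nonneg[of y] I_nonneg[of "c*y"]
        by (cases "\<eta> = 1") (auto simp: field_simps)
    next
      case False
      then have "(1 - \<eta>) * c powr - \<alpha> * I y \<le> 0" using c I_nonneg[of y]
        by (intro mult_nonpos_nonneg) auto
      then show ?thesis using I_nonneg[of "c*y"] by linarith
    qed
  qed
qed

end


context rmodel begin

lemma indep2_prob:
  fixes g1 g2 :: "(nat + nat \<Rightarrow> real) \<Rightarrow> real"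
  assumes "A \<inter> B = {}"
    and [measurable]: "g1 \<in> borel_measurable (PiM A (\<lambda>_. borel))"
    and [measurable]: "g2 \<in> borel_measurable (PiM B (\<lambda>_. borel))"
    and [measurable]: "S1 \<in> sets borel" "S2 \<in> sets borel"
  shows "prob {\<omega> \<in> space M. g1 (restrict (\<lambda>i. Z i \<omega>) A) \<in> S1 \<and> g2 (restrict (\<lambda>i. Z i \<omega>) B) \<in> S2}
    = prob {\<omega> \<in> space M. g1 (restrict (\<lambda>i. Z i \<omega>) A) \<in> S1} * prob {\<omega> \<in> space M. g2 (restrict (\<lambda>i. Z i \<omega>) B) \<in> S2}"
  using prob_indep_random_variable[OF indep2[OF assms(1-3)] assms(4,5)] by simp

lemma prob_\<sigma>\<sigma>:
  assumes "j \<noteq> k" "a > 0"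
  shows "prob {\<omega> \<in> space M. \<sigma> j \<omega> > a \<and> \<sigma> k \<omega> > a} = F a * F a"
proof -
  have "prob {\<omega> \<in> space M. (\<lambda>f. f (Inr j)) (restrict (\<lambda>i. Z i \<omega>) {Inr j}) \<in> {a<..} \<and> (\<lambda>f. f (Inr k)) (restrict (\<lambda>i. Z i \<omega>) {Inr k}) \<in> {a<..}}
    = prob {\<omega> \<in> space M. (\<lambda>f. f (Inr j)) (restrict (\<lambda>i. Z i \<omega>) {Inr j}) \<in> {a<..}} * prob {\<omega> \<in> space M. (\<lambda>f. f (Inr k)) (restrict (\<lambda>i. Z i \<omega>) {Inr k}) \<in> {a<..}}"
    using assms(1) by (intro indep2_prob) (auto intro!: measurable_component_singleton)
  then show ?thesis using Fk[OF assms(2), of j] Fk[OF assms(2), of k] by (simp add: Z_def)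
qed

lemma prob_\<theta>\<sigma>:
  assumes "b > 0"
  shows "prob {\<omega> \<in> space M. \<theta> i \<omega> \<le> T \<and> \<sigma> k \<omega> > b} = prob {\<omega> \<in> space M. \<theta> i \<omega> \<le> T} * F b"
proof -
  have "prob {\<omega> \<in> space M. (\<lambda>f. \<Sum>l\<le>i. f (Inl l)) (restrict (\<lambda>i. Z i \<omega>) (Inl ` {..i})) \<in> {..T} \<and> (\<lambda>f. f (Inr k)) (restrict (\<lambda>i. Z i \<omega>) {Inr k}) \<in> {b<..}}
    = prob {\<omega> \<in> space M. (\<lambda>f. \<Sum>l\<le>i. f (Inl l)) (restrict (\<lambda>i. Z i \<omega>) (Inl ` {..i})) \<in> {..T}} * prob {\<omega> \<in> space M. (\<lambda>f. f (Inr k)) (restrict (\<lambda>i. Z i \<omega>) {Inr k}) \<in> {b<..}}"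
    by (intro indep2_prob) (auto intro!: measurable_component_singleton borel_measurable_sum)
  then show ?thesis using Fk[OF assms(1), of k] by (simp add: Z_def \<theta>_def arrival_def)
qed

lemma prob_\<theta>\<sigma>\<sigma>:
  assumes "j < k" "y > 0"
  shows "prob {\<omega> \<in> space M. \<theta> k \<omega> \<le> T \<and> \<sigma> j \<omega> > y \<and> \<sigma> k \<omega> > y} = prob {\<omega> \<in> space M. \<theta> k \<omega> \<le> T} * F y * F y"
proof -
  let ?g = "\<lambda>f. if (\<Sum>l\<le>k. f (Inl l)) \<le> T \<and> f (Inr j) > y then 1 else (0::real)"
  have 1: "prob {\<omega> \<in> space M. ?g (restrict (\<lambda>i. Z i \<omega>) (Inl ` {..k} \<union> {Inr j})) \<in> {1} \<and> (\<lambda>f. f (Inr k)) (restrict (\<lambda>i. Z i \<omega>) {Inr k}) \<in> {y<..}}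
    = prob {\<omega> \<in> space M. ?g (restrict (\<lambda>i. Z i \<omega>) (Inl ` {..k} \<union> {Inr j})) \<in> {1}} * prob {\<omega> \<in> space M. (\<lambda>f. f (Inr k)) (restrict (\<lambda>i. Z i \<omega>) {Inr k}) \<in> {y<..}}"
    using assms(1) by (intro indep2_prob) (auto intro!: measurable_component_singleton borel_measurable_sum)
  have e2: "prob {\<omega> \<in> space M. ?g (restrict (\<lambda>i. Z i \<omega>) (Inl ` {..k} \<union> {Inr j})) \<in> {1}} = prob {\<omega> \<in> space M. \<theta> k \<omega> \<le> T \<and> \<sigma> j \<omega> > y}"
    by (rule arg_cong[where f=prob]) (auto simp: Z_def \<theta>_def arrival_def)
  have e3: "{\<omega> \<in> space M. ?g (restrict (\<lambda>i. Z i \<omega>) (Inl ` {..k} \<union> {Inr j})) \<in> {1} \<and> (\<lambda>f. f (Inr k)) (restrict (\<lambda>i. Z i \<omega>) {Inr k}) \<in> {y<..}}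
     = {\<omega> \<in> space M. \<theta> k \<omega> \<le> T \<and> \<sigma> j \<omega> > y \<and> \<sigma> k \<omega> > y}"
    by (auto simp: Z_def \<theta>_def arrival_def)
  have e4: "prob {\<omega> \<in> space M. (\<lambda>f. f (Inr k)) (restrict (\<lambda>i. Z i \<omega>) {Inr k}) \<in> {y<..}} = F y"
    using Fk[OF assms(2), of k] by (simp add: Z_def)
  from 1[unfolded e2 e3 e4] show ?thesis using prob_\<theta>\<sigma>[OF assms(2), of k j] by simp
qed

lemma F_tendsto0: "(F \<longlongrightarrow> 0) at_top"
proof -
  let ?A = "\<lambda>n::nat. {\<omega> \<in> space M. \<sigma> 0 \<omega> > real n}"
  have "(\<lambda>n. prob (?A n)) \<longlonglongrightarrow> prob (\<Inter>n. ?A n)"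
    by (rule finite_Lim_measure_decseq) (auto simp: decseq_def)
  moreover have "(\<Inter>n. ?A n) = {}"
  proof -
    have "\<not> (\<forall>n::nat. \<sigma> 0 \<omega> > real n)" for \<omega>
      using reals_Archimedean2[of "\<sigma> 0 \<omega>"] by (auto simp: not_less dest: less_imp_le)
    then show ?thesis by auto
  qed
  ultimately have lim: "(\<lambda>n. F (real n)) \<longlonglongrightarrow> 0" by (simp add: F_def)
  show ?thesis
  proof (rule tendstoI)
    fix e :: real assume e: "e > 0"
    from lim e obtain N where N: "\<And>n. n \<ge> N \<Longrightarrow> dist (F (real n)) 0 < e"
      by (auto simp: lim_sequentially)
    have "\<forall>\<^sub>F z in at_top. z \<ge> real N" by (rule eventually_ge_at_top)
    then show "\<forall>\<^sub>F z in at_top. dist (F z) 0 < e"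
    proof eventually_elim
      case (elim z)
      have "F z \<le> F (real N)" using elim by (rule F_antimono)
      then show ?case using N[of N] F_nonneg[of z] F_nonneg[of "real N"] by (simp add: dist_real_def)
    qed
  qed
qed

end


context rmodel begin

lemma pow2_bracket:
  fixes u :: real assumes u: "u \<ge> 1"
  shows "\<exists>j::nat. u \<le> 2 ^ j \<and> 2 ^ j < 2 * u"
proof -
  define j where "j = nat \<lceil>log 2 u\<rceil>"
  have l: "log 2 u \<ge> 0" using u by simp
  have j1: "real j \<ge> log 2 u" unfolding j_def using l by linarith
  have j2: "real j < log 2 u + 1" unfolding j_def using l by linarith
  have "(2::real) ^ j = 2 powr real j" by (simp add: powr_realpow)
  moreover have "2 powr log 2 u = u" using u by simp
  moreover have "2 powr (log 2 u + 1) = 2 * u" using u by (simp add: powr_add)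
  ultimately show ?thesis using j1 j2
    by (intro exI[of _ j]) (metis powr_le_cancel_iff powr_less_cancel_iff one_less_numeral_iff semiring_norm(76))
qed

lemma potter:
  "\<exists>C>0. \<exists>z1>0. \<forall>x\<ge>z1. \<forall>u\<ge>1. F (x / u) \<le> C * u powr (\<alpha> + 1) * F x"
proof -
  obtain z0 where z0: "z0 > 0" and b: "\<And>z. z \<ge> z0 \<Longrightarrow> F z > 0 \<and> F ((1/2) * z) \<le> (1 + 1) * (1/2) powr - \<alpha> * F z"
    using F_ratio_bounds[of "1/2" 1] by auto
  define K where "K = (2::real) powr (\<alpha> + 1)"
  have K: "(1 + 1) * (1/2::real) powr - \<alpha> = K"
    unfolding K_def by (simp add: powr_add powr_minus_divide powr_divide)
  have Kpos: "K > 0" unfolding K_def by simp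
  have dbl: "\<forall>z. z / 2 ^ j \<ge> z0 \<longrightarrow> F (z / 2 ^ j) \<le> K ^ j * F z" for j
  proof (induction j)
    case 0 then show ?case by simp
  next
    case (Suc j)
    show ?case
    proof (intro allI impI)
      fix z :: real assume a: "z / 2 ^ Suc j \<ge> z0"
      define w where "w = z / 2 ^ j"
      have w: "z / 2 ^ Suc j = (1/2) * w" unfolding w_def by simp
      have wz: "w \<ge> z0" using a z0 unfolding w by (simp add: field_simps)
      have "F ((1/2) * w) \<le> K * F w" using b[OF wz] K by simp
      also have "\<dots> \<le> K * (K ^ j * F z)" using Suc.IH wz Kpos unfolding w_def by (intro mult_left_mono) auto
      finally have "F ((1/2) * w) \<le> K ^ Suc j * F z" by (simp add: mult.assoc)
      then show "F (z / 2 ^ Suc j) \<le> K ^ Suc j * F z" by (simp only: w)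
    qed
  qed
  obtain z2 where z2: "\<And>z. z \<ge> z2 \<Longrightarrow> L z \<ge> 1"
    using L_inf unfolding filterlim_at_top eventually_at_top_linorder by blast
  define z1 where "z1 = max z0 (max z2 1)"
  define C where "C = K + (2 * z0) powr \<alpha>"
  have Cpos: "C > 0" unfolding C_def using Kpos by (simp add: add_pos_nonneg)
  show ?thesis
  proof (rule exI[of _ C], intro conjI Cpos, rule exI[of _ z1], intro conjI allI impI)
    show "z1 > 0" unfolding z1_def by simp
    fix x u :: real assume x: "x \<ge> z1" and u: "u \<ge> 1"
    have xpos: "x > 0" using x unfolding z1_def by simp
    have Fx: "F x \<ge> x powr - \<alpha>"
    proof -
      have "L x \<ge> 1" using z2 x unfolding z1_def by simp
      then show ?thesis using F_eq[OF xpos] xpos by (simp add: powr_minus_divide divide_right_mono)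
    qed
    have Fxpos: "F x > 0" using b[of x] x unfolding z1_def by simp
    obtain j :: nat where j: "u \<le> 2 ^ j" "2 ^ j < 2 * u" using pow2_bracket[OF u] by blast
    have upos: "u > 0" using u by simp
    have "F (x / u) \<le> F (x / 2 ^ j)"
      using j upos xpos by (intro F_antimono divide_left_mono) auto
    have up: "u powr \<alpha> \<le> u powr (\<alpha> + 1)" using u by (intro powr_mono) auto
    show "F (x / u) \<le> C * u powr (\<alpha> + 1) * F x"
    proof (cases "x / 2 ^ j \<ge> z0")
      case True
      have "F (x / u) \<le> K ^ j * F x" using dbl[of j] True \<open>F (x / u) \<le> F (x / 2 ^ j)\<close> by auto
      also have "K ^ j = (2 ^ j) powr (\<alpha> + 1)"
        unfolding K_def by (simp add: powr_realpow[symmetric] powr_powr mult.commute)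
      also have "\<dots> \<le> (2 * u) powr (\<alpha> + 1)" using j alpha by (intro powr_mono2) auto
      also have "\<dots> = K * u powr (\<alpha> + 1)" unfolding K_def using upos by (simp add: powr_mult)
      finally have "F (x / u) \<le> K * u powr (\<alpha> + 1) * F x" using Fxpos by (simp add: mult_right_mono)
      also have "\<dots> \<le> C * u powr (\<alpha> + 1) * F x"
        unfolding C_def using Fxpos by (intro mult_right_mono) (auto intro!: mult_right_mono)
      finally show ?thesis .
    next
      case False
      then have "x < 2 ^ j * z0" by (simp add: field_simps)
      also have "\<dots> \<le> 2 * u * z0" using j z0 by (intro mult_right_mono) auto
      finally have x2: "x < 2 * z0 * u" by (simp add: mult_ac)
      have "1 = (2 * z0 * u) powr \<alpha> * (2 * z0 * u) powr - \<alpha>"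
        using z0 upos by (simp add: powr_minus field_simps)
      also have "\<dots> \<le> (2 * z0 * u) powr \<alpha> * x powr - \<alpha>"
        using x2 xpos alpha by (intro mult_left_mono) (auto simp: powr_minus intro!: le_imp_inverse_le powr_mono2)
      also have "\<dots> \<le> (2 * z0 * u) powr \<alpha> * F x" using Fx by (intro mult_left_mono) auto
      also have "(2 * z0 * u) powr \<alpha> = (2 * z0) powr \<alpha> * u powr \<alpha>" using z0 upos by (simp add: powr_mult)
      also have "(2 * z0) powr \<alpha> * u powr \<alpha> * F x \<le> (2 * z0) powr \<alpha> * u powr (\<alpha> + 1) * F x"
        using up Fxpos by (intro mult_right_mono mult_left_mono) auto
      also have "\<dots> \<le> C * u powr (\<alpha> + 1) * F x"
        unfolding C_def using Fxpos Kpos by (intro mult_right_mono) auto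
      finally show ?thesis using F_le1[of "x / u"] by linarith
    qed
  qed
qed

end


context rmodel begin

abbreviation "p1 \<equiv> c1 / (r * \<delta>1)"
abbreviation "p2 \<equiv> c2 / (r * \<delta>2)"

lemma p_le: "p2 \<le> p1"
proof -
  have "c2 / \<delta>2 / r \<le> c1 / \<delta>1 / r" using p_order r by (intro divide_right_mono) auto
  then show ?thesis by (simp add: field_simps)
qed

definition "Ak y k = {\<omega> \<in> space M. \<theta> k \<omega> \<le> T \<and> exp (- r * \<theta> k \<omega>) * \<sigma> k \<omega> > y}"

lemma Ak_sets[measurable]: "Ak y k \<in> sets M" unfolding Ak_def by measurable

lemma Y_le_\<sigma>: "good \<omega> \<Longrightarrow> \<omega> \<in> space M \<Longrightarrow> exp (- r * \<theta> k \<omega>) * \<sigma> k \<omega> \<le> \<sigma> k \<omega>"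
  using good_nonneg[of \<omega> k] r \<sigma>_nonneg[of \<omega> k] by (intro mult_left_le_one_le) auto

lemma Ak_in_R:
  assumes x: "0 < x1" "x1 \<le> x2" and g: "good \<omega>" and A: "\<omega> \<in> Ak (x2 + p1) k"
  shows "\<omega> \<in> Rset x1 x2"
proof -
  define t where "t = \<theta> k \<omega>"
  have \<omega>: "\<omega> \<in> space M" and tT: "t \<le> T" and Yk: "exp (- r * t) * \<sigma> k \<omega> > x2 + p1"
    using A unfolding Ak_def t_def by auto
  have t0: "0 \<le> t" unfolding t_def by (rule good_nonneg[OF g])
  have kc: "k < count_proc W t \<omega>" using good_count[OF g] unfolding t_def by simp
  let ?S = "\<Sum>i<count_proc W t \<omega>. exp (- r * arrival W i \<omega>) * \<sigma> i \<omega>"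
  have "exp (- r * arrival W k \<omega>) * \<sigma> k \<omega> \<le> ?S"
    using kc \<sigma>_nonneg[OF \<omega>] by (intro member_le_sum) auto
  then have S: "?S > x2 + p1" using Yk by (simp add: arrival_\<theta> t_def)
  have e: "0 \<le> 1 - exp (- r * t)" "1 - exp (- r * t) \<le> 1" using t0 r by auto
  have b1: "p1 * (1 - exp (- r * t)) \<le> p1" by (rule mult_left_le) (use e p_pos in auto)
  have "p2 * (1 - exp (- r * t)) \<le> p2" by (rule mult_left_le) (use e p_pos in auto)
  then have b2: "p2 * (1 - exp (- r * t)) \<le> p1" using p_le by linarith
  have "ruinQ x1 x2 t \<omega>" unfolding ruinQ_def Xproc_def using S b1 b2 x by linarith
  then show ?thesis unfolding Rset_def using \<omega> t0 tT by auto
qed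

lemma bonferroni:
  fixes A :: "nat \<Rightarrow> 'a set" and K :: nat
  assumes [measurable]: "\<And>k. A k \<in> sets M"
  shows "(\<Sum>k<K. prob (A k)) - (\<Sum>k<K. \<Sum>j<k. prob (A j \<inter> A k)) \<le> prob (\<Union>k<K. A k)"
proof (induction K)
  case 0 then show ?case by simp
next
  case (Suc K)
  let ?U = "\<Union>k<K. A k"
  have U: "?U \<in> sets M" by measurable
  have "prob (?U \<union> A K) = prob ?U + prob (A K) - prob (?U \<inter> A K)"
    using U by (intro measure_Un3) (auto simp: fmeasurable_eq_sets)
  moreover have "prob (?U \<inter> A K) \<le> (\<Sum>j<K. prob (A j \<inter> A K))"
  proof -
    have "?U \<inter> A K = (\<Union>j\<in>{..<K}. A j \<inter> A K)" by auto
    also have "prob \<dots> \<le> (\<Sum>j<K. prob (A j \<inter> A K))"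
      by (rule finite_measure_subadditive_finite) auto
    finally show ?thesis .
  qed
  moreover have "(\<Union>k<Suc K. A k) = ?U \<union> A K" by (auto simp: lessThan_Suc)
  ultimately show ?case using Suc.IH by simp
qed

definition "\<rho> = 1 - exp (- T * lam)"
definition "s = sqrt \<rho>"

lemma \<rho>_bounds: "0 < \<rho>" "\<rho> < 1" unfolding \<rho>_def using T lam by auto
lemma s_bounds: "0 < s" "s < 1" unfolding s_def using \<rho>_bounds by auto

lemma \<theta>T: "prob {\<omega> \<in> space M. \<theta> k \<omega> \<le> T} \<le> \<rho> ^ Suc k"
  unfolding \<rho>_def using \<theta>_le[of T k] T by simp

lemma \<rho>_pow_s: "j \<le> k \<Longrightarrow> \<rho> ^ Suc k \<le> s ^ j * s ^ k"
proof -
  assume jk: "j \<le> k"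
  have "\<rho> ^ Suc k \<le> \<rho> ^ k" using \<rho>_bounds by (intro power_decreasing) auto
  also have "\<rho> ^ k = s ^ k * s ^ k" unfolding s_def using \<rho>_bounds
    by (simp add: power_mult_distrib[symmetric])
  also have "\<dots> \<le> s ^ j * s ^ k" using s_bounds jk by (intro mult_right_mono power_decreasing) auto
  finally show ?thesis .
qed

lemma geom_le: "(\<Sum>j<n. s ^ j) \<le> 1 / (1 - s)"
  using s_bounds by (simp add: sum_gp_strict field_simps)

lemma LB:
  assumes x: "0 < x1" "x1 \<le> x2"
  shows "lam * I (x2 + p1) - F (x2 + p1) * F (x2 + p1) * (1 / (1 - s)) * (1 / (1 - s)) \<le> measure M (Rset x1 x2)"
proof -
  define y where "y = x2 + p1"
  have y: "y > 0" unfolding y_def using x p_pos by simp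
  define E where "E = F y * F y * (1 / (1 - s)) * (1 / (1 - s))"
  have R: "Rset x1 x2 \<in> sets M" using x p_pos by (intro Rset_meas) auto
  have part: "(\<Sum>k<K. prob (Ak y k)) \<le> prob (Rset x1 x2) + E" for K
  proof -
    have pair: "prob (Ak y j \<inter> Ak y k) \<le> s ^ j * s ^ k * (F y * F y)" if jk: "j < k" for j k
    proof -
      have "prob (Ak y j \<inter> Ak y k) \<le> prob {\<omega> \<in> space M. \<theta> k \<omega> \<le> T \<and> \<sigma> j \<omega> > y \<and> \<sigma> k \<omega> > y}"
      proof (rule finite_measure_mono_AE)
        show "AE \<omega>\<in>Ak y j \<inter> Ak y k in M. \<omega> \<in> {\<omega> \<in> space M. \<theta> k \<omega> \<le> T \<and> \<sigma> j \<omega> > y \<and> \<sigma> k \<omega> > y}"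
          using good_AE
        proof eventually_elim
          case (elim \<omega>)
          show ?case
          proof
            assume a: "\<omega> \<in> Ak y j \<inter> Ak y k"
            then have \<omega>: "\<omega> \<in> space M" unfolding Ak_def by auto
            show "\<omega> \<in> {\<omega> \<in> space M. \<theta> k \<omega> \<le> T \<and> \<sigma> j \<omega> > y \<and> \<sigma> k \<omega> > y}"
              using a Y_le_\<sigma>[OF elim \<omega>, of j] Y_le_\<sigma>[OF elim \<omega>, of k] \<omega> unfolding Ak_def by auto
          qed
        qed
      qed measurable
      also have "\<dots> = prob {\<omega> \<in> space M. \<theta> k \<omega> \<le> T} * F y * F y" by (rule prob_\<theta>\<sigma>\<sigma>[OF jk y])
      also have "\<dots> \<le> s ^ j * s ^ k * (F y * F y)"
      proof -
        have FF: "0 \<le> F y * F y" using F_nonneg[of y] by simp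
        have "prob {\<omega> \<in> space M. \<theta> k \<omega> \<le> T} * F y * F y = prob {\<omega> \<in> space M. \<theta> k \<omega> \<le> T} * (F y * F y)"
          by (simp add: mult.assoc)
        also have "\<dots> \<le> \<rho> ^ Suc k * (F y * F y)" using \<theta>T[of k] FF by (rule mult_right_mono)
        also have "\<dots> \<le> s ^ j * s ^ k * (F y * F y)" using \<rho>_pow_s[of j k] jk FF by (intro mult_right_mono) auto
        finally show ?thesis .
      qed
      finally show ?thesis .
    qed
    have dbl: "(\<Sum>k<K. \<Sum>j<k. prob (Ak y j \<inter> Ak y k)) \<le> E"
    proof -
      have "(\<Sum>k<K. \<Sum>j<k. prob (Ak y j \<inter> Ak y k)) \<le> (\<Sum>k<K. \<Sum>j<k. s ^ j * s ^ k * (F y * F y))"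
        using pair by (intro sum_mono) auto
      also have "\<dots> = (\<Sum>k<K. s ^ k * (\<Sum>j<k. s ^ j)) * (F y * F y)"
        by (simp add: sum_distrib_left sum_distrib_right mult_ac)
      also have "\<dots> \<le> (\<Sum>k<K. s ^ k * (1 / (1 - s))) * (F y * F y)"
        using s_bounds geom_le F_nonneg[of y] by (intro mult_right_mono sum_mono mult_left_mono) auto
      also have "\<dots> = (\<Sum>k<K. s ^ k) * (1 / (1 - s)) * (F y * F y)"
        by (simp only: sum_distrib_right)
      also have "\<dots> \<le> (1 / (1 - s)) * (1 / (1 - s)) * (F y * F y)"
        using s_bounds geom_le[of K] F_nonneg[of y] by (intro mult_right_mono) auto
      finally show ?thesis unfolding E_def by (simp add: mult_ac)
    qed
    have "prob (\<Union>k<K. Ak y k) \<le> prob (Rset x1 x2)"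
    proof (rule finite_measure_mono_AE)
      show "AE \<omega>\<in>(\<Union>k<K. Ak y k) in M. \<omega> \<in> Rset x1 x2"
        using good_AE by eventually_elim (use Ak_in_R[OF x] y_def in blast)
    qed (rule R)
    with bonferroni[of "Ak y" K] dbl show ?thesis by simp
  qed
  have "(\<lambda>i. ennreal (prob (Ak y i))) sums (ennreal lam * Ie y)"
  proof -
    have "(\<lambda>i. emeasure M (Ak y i)) sums (\<Sum>i. emeasure M (Ak y i))" by (rule summable_sums) simp
    then show ?thesis using S_formula[OF y] unfolding Ak_def by (simp add: emeasure_eq_measure)
  qed
  then have "(\<lambda>i. prob (Ak y i)) sums (lam * I y)"
    unfolding Ie_I using lam I_nonneg[of y]
    by (subst (asm) ennreal_mult'[symmetric]) (auto simp: sums_ennreal)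
  then have "(\<lambda>K. \<Sum>k<K. prob (Ak y k)) \<longlonglongrightarrow> lam * I y" by (simp add: sums_def)
  then have "lam * I y \<le> prob (Rset x1 x2) + E"
    by (rule LIMSEQ_le_const2) (use part in auto)
  then show ?thesis unfolding E_def y_def by simp
qed

end


context rmodel begin

lemma UB_pointwise:
  assumes x: "0 < x1" "x1 \<le> x2" and e: "0 < \<epsilon>'" "\<epsilon>' < 1" and m: "m \<ge> 1" and \<tau>: "0 < \<tau>" "\<tau> < 1"
    and g: "good \<omega>" and R: "\<omega> \<in> Rset x1 x2"
  shows "(\<exists>k. \<omega> \<in> Ak ((1 - \<epsilon>') * x2) k) \<or>
         (\<exists>j<m. \<exists>k<m. j \<noteq> k \<and> \<sigma> j \<omega> > \<epsilon>' * x2 / m \<and> \<sigma> k \<omega> > \<epsilon>' * x2 / m) \<or>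
         (\<exists>k. \<theta> (max k m) \<omega> \<le> T \<and> \<sigma> k \<omega> > x2 * (1 - \<tau>) * \<tau> ^ k)"
proof -
  obtain t where \<omega>: "\<omega> \<in> space M" and t: "0 \<le> t" "t \<le> T" and Q: "ruinQ x1 x2 t \<omega>"
    using R unfolding Rset_def by auto
  define n where "n = count_proc W t \<omega>"
  have kn: "k < n \<longleftrightarrow> \<theta> k \<omega> \<le> t" for k unfolding n_def by (rule good_count[OF g])
  define Y where "Y k = exp (- r * \<theta> k \<omega>) * \<sigma> k \<omega>" for k
  have Y\<sigma>: "Y k \<le> \<sigma> k \<omega>" for k unfolding Y_def by (rule Y_le_\<sigma>[OF g \<omega>])
  have Y0: "0 \<le> Y k" for k unfolding Y_def using \<sigma>_nonneg[OF \<omega>] by simp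
  have "p2 * (1 - exp (- r * t)) \<ge> 0" using t r p_pos by (intro mult_nonneg_nonneg) auto
  then have sum: "(\<Sum>k<n. Y k) > x2"
    using Q unfolding ruinQ_def Xproc_def Y_def n_def arrival_\<theta> by linarith
  show ?thesis
  proof (cases "\<exists>k<n. Y k > (1 - \<epsilon>') * x2")
    case True
    then obtain k where "k < n" "Y k > (1 - \<epsilon>') * x2" by auto
    then have "\<omega> \<in> Ak ((1 - \<epsilon>') * x2) k" using kn[of k] t \<omega> unfolding Ak_def Y_def by auto
    then show ?thesis by blast
  next
    case notA: False
    show ?thesis
    proof (cases "n \<le> m")
      case True
      define a where "a = \<epsilon>' * x2 / m"
      have apos: "a \<ge> 0" unfolding a_def using e x by auto
      have ma: "real m * a = \<epsilon>' * x2" unfolding a_def using m by simp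
      have "\<exists>j<m. \<exists>k<m. j \<noteq> k \<and> \<sigma> j \<omega> > a \<and> \<sigma> k \<omega> > a"
      proof (rule ccontr)
        assume no: "\<not> ?thesis"
        show False
        proof (cases "\<forall>k<n. \<sigma> k \<omega> \<le> a")
          case True
          have "(\<Sum>k<n. Y k) \<le> (\<Sum>k<n. a)" using True Y\<sigma> by (intro sum_mono) (auto intro: order_trans)
          also have "\<dots> = real n * a" by simp
          also have "\<dots> \<le> real m * a" using \<open>n \<le> m\<close> apos by (intro mult_right_mono) auto
          also have "\<dots> \<le> x2" using ma e x by (simp add: mult_left_le_one_le)
          finally show False using sum by simp
        next
          case False
          then obtain k0 where k0: "k0 < n" "\<sigma> k0 \<omega> > a" by (auto simp: not_le)
          have others: "\<sigma> k \<omega> \<le> a" if "k < n" "k \<noteq> k0" for k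
            using no k0 that \<open>n \<le> m\<close> by (metis less_le_trans not_le)
          have "(\<Sum>k<n. Y k) = Y k0 + (\<Sum>k\<in>{..<n} - {k0}. Y k)"
            using k0 by (intro sum.remove) auto
          also have "(\<Sum>k\<in>{..<n} - {k0}. Y k) \<le> (\<Sum>k\<in>{..<n} - {k0}. a)"
            using others Y\<sigma> by (intro sum_mono) (auto intro: order_trans)
          also have "\<dots> = real (n - 1) * a" using k0 by simp
          also have "\<dots> \<le> real m * a" using apos \<open>n \<le> m\<close> by (intro mult_right_mono) auto
          finally have "(\<Sum>k<n. Y k) \<le> Y k0 + \<epsilon>' * x2" using ma by simp
          moreover have "Y k0 \<le> (1 - \<epsilon>') * x2" using notA k0 by auto
          moreover have "(1 - \<epsilon>') * x2 + \<epsilon>' * x2 = x2" by (simp add: algebra_simps)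
          ultimately show False using sum by linarith
        qed
      qed
      then show ?thesis unfolding a_def by blast
    next
      case False
      then have "\<theta> m \<omega> \<le> t" using kn[of m] by simp
      have "\<exists>k<n. \<sigma> k \<omega> > x2 * (1 - \<tau>) * \<tau> ^ k"
      proof (rule ccontr)
        assume "\<not> ?thesis"
        then have le: "k < n \<Longrightarrow> \<sigma> k \<omega> \<le> x2 * (1 - \<tau>) * \<tau> ^ k" for k by (meson not_less)
        have "(\<Sum>k<n. Y k) \<le> (\<Sum>k<n. x2 * (1 - \<tau>) * \<tau> ^ k)"
          using le Y\<sigma> by (intro sum_mono) (auto intro: order_trans)
        also have "\<dots> = x2 * (1 - \<tau>) * (\<Sum>k<n. \<tau> ^ k)" by (simp add: sum_distrib_left)
        also have "\<dots> = x2 * (1 - \<tau> ^ n)" using \<tau> by (simp add: sum_gp_strict)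
        also have "\<dots> \<le> x2" using \<tau> x by (simp add: zero_le_power)
        finally show False using sum by simp
      qed
      then obtain k where k: "k < n" "\<sigma> k \<omega> > x2 * (1 - \<tau>) * \<tau> ^ k" by auto
      have "\<theta> (max k m) \<omega> \<le> T"
        using kn[of k] \<open>\<theta> m \<omega> \<le> t\<close> k t by (cases "k \<le> m") (auto simp: max_def)
      with k show ?thesis by blast
    qed
  qed
qed

lemma UB:
  assumes x: "0 < x1" "x1 \<le> x2" and e: "0 < \<epsilon>'" "\<epsilon>' < 1" and m: "m \<ge> 1" and \<tau>: "0 < \<tau>" "\<tau> < 1"
    and b: "\<And>k. \<rho> ^ Suc (max k m) * F (x2 * (1 - \<tau>) * \<tau> ^ k) \<le> b k" and sb: "summable b"
  shows "measure M (Rset x1 x2) \<le> lam * I ((1 - \<epsilon>') * x2) + real m * real m * (F (\<epsilon>' * x2 / m) * F (\<epsilon>' * x2 / m)) + suminf b"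
proof -
  define a where "a = \<epsilon>' * x2 / m"
  have apos: "a > 0" unfolding a_def using e x m by auto
  define U1 where "U1 = (\<Union>k. Ak ((1 - \<epsilon>') * x2) k)"
  define B where "B j k = {\<omega> \<in> space M. j \<noteq> k \<and> \<sigma> j \<omega> > a \<and> \<sigma> k \<omega> > a}" for j k
  define U2 where "U2 = (\<Union>j\<in>{..<m}. \<Union>k\<in>{..<m}. B j k)"
  define C where "C k = {\<omega> \<in> space M. \<theta> (max k m) \<omega> \<le> T \<and> \<sigma> k \<omega> > x2 * (1 - \<tau>) * \<tau> ^ k}" for k
  define U3 where "U3 = (\<Union>k. C k)"
  have [measurable]: "B j k \<in> sets M" "C k \<in> sets M" for j k unfolding B_def C_def by measurable
  have U[measurable]: "U1 \<in> sets M" "U2 \<in> sets M" "U3 \<in> sets M" unfolding U1_def U2_def U3_def by measurable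
  have R: "Rset x1 x2 \<in> sets M" using x by (intro Rset_meas) auto
  have "prob (Rset x1 x2) \<le> prob (U1 \<union> U2 \<union> U3)"
  proof (rule finite_measure_mono_AE)
    show "AE \<omega>\<in>Rset x1 x2 in M. \<omega> \<in> U1 \<union> U2 \<union> U3"
      using good_AE
    proof eventually_elim
      case (elim \<omega>)
      show ?case
      proof
        assume \<omega>R: "\<omega> \<in> Rset x1 x2"
        then have \<omega>: "\<omega> \<in> space M" unfolding Rset_def by auto
        from UB_pointwise[OF x e m \<tau> elim \<omega>R] show "\<omega> \<in> U1 \<union> U2 \<union> U3"
          unfolding U1_def U2_def U3_def B_def C_def a_def using \<omega> by blast
      qed
    qed
  qed measurable
  also have "\<dots> \<le> prob (U1 \<union> U2) + prob U3" by (rule measure_Un_le) measurable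
  also have "prob (U1 \<union> U2) \<le> prob U1 + prob U2" by (rule measure_Un_le) measurable
  also have "prob U1 \<le> lam * I ((1 - \<epsilon>') * x2)"
  proof -
    have y: "(1 - \<epsilon>') * x2 > 0" using e x by simp
    have "emeasure M U1 \<le> (\<Sum>k. emeasure M (Ak ((1 - \<epsilon>') * x2) k))"
      unfolding U1_def by (rule emeasure_subadditive_countably) auto
    also have "\<dots> = ennreal (lam * I ((1 - \<epsilon>') * x2))"
      using S_formula[OF y] lam unfolding Ak_def Ie_I by (simp add: ennreal_mult')
    finally show ?thesis using lam I_nonneg by (simp add: emeasure_eq_measure ennreal_le_iff)
  qed
  also have "prob U2 \<le> real m * real m * (F a * F a)"
  proof -
    have Bb: "prob (B j k) \<le> F a * F a" for j k
    proof (cases "j = k")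
      case True then show ?thesis unfolding B_def using F_nonneg[of a] by simp
    next
      case False
      then have "B j k = {\<omega> \<in> space M. \<sigma> j \<omega> > a \<and> \<sigma> k \<omega> > a}" unfolding B_def by auto
      then show ?thesis using prob_\<sigma>\<sigma>[OF False apos] by simp
    qed
    have "prob U2 \<le> (\<Sum>j<m. prob (\<Union>k\<in>{..<m}. B j k))"
      unfolding U2_def by (rule finite_measure_subadditive_finite) auto
    also have "\<dots> \<le> (\<Sum>j<m. \<Sum>k<m. prob (B j k))"
      by (intro sum_mono finite_measure_subadditive_finite) auto
    also have "\<dots> \<le> (\<Sum>j<m. \<Sum>k<m. F a * F a)" using Bb by (intro sum_mono) auto
    finally show ?thesis by simp
  qed
  also have "prob U3 \<le> suminf b"
  proof -
    have Cb: "prob (C k) \<le> b k" for k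
    proof -
      have pos: "x2 * (1 - \<tau>) * \<tau> ^ k > 0" using x \<tau> by simp
      have "prob (C k) = prob {\<omega> \<in> space M. \<theta> (max k m) \<omega> \<le> T} * F (x2 * (1 - \<tau>) * \<tau> ^ k)"
        unfolding C_def by (rule prob_\<theta>\<sigma>[OF pos])
      also have "\<dots> \<le> \<rho> ^ Suc (max k m) * F (x2 * (1 - \<tau>) * \<tau> ^ k)"
        using \<theta>T F_nonneg by (intro mult_right_mono) auto
      finally show ?thesis using b[of k] by simp
    qed
    have sC: "summable (\<lambda>k. prob (C k))"
      by (rule summable_comparison_test[OF _ sb]) (use Cb in auto)
    have "prob U3 \<le> (\<Sum>k. prob (C k))"
      unfolding U3_def by (rule finite_measure_subadditive_countably) (auto intro: sC)
    also have "\<dots> \<le> suminf b" by (rule suminf_le[OF Cb sC sb])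
    finally show ?thesis .
  qed
  finally show ?thesis unfolding a_def by simp
qed

end


context rmodel begin

lemma Psi_eq: "Psi_max M r p1 p2 W \<sigma> x1 x2 T = prob (Rset x1 x2)"
  unfolding Psi_max_def Rset_def ruinQ_def ..

lemma den_eq:
  assumes "x2 > 0"
  shows "measure M {\<omega> \<in> space M. exp (- r * V \<omega>) * \<sigma> 0 \<omega> > x2} = I x2 / T"
proof -
  have "emeasure M {\<omega> \<in> space M. exp (- r * V \<omega>) * \<sigma> 0 \<omega> > x2} = ennreal (I x2 / T)"
    using D_formula[OF assms] T I_nonneg[of x2] unfolding Ie_I by (simp add: divide_ennreal)
  then show ?thesis using T I_nonneg[of x2] by (simp add: emeasure_eq_measure)
qed

lemma powr_near1:
  assumes \<eta>: "\<eta> > 0"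
  shows "\<exists>\<epsilon>'. 0 < \<epsilon>' \<and> \<epsilon>' \<le> 1/2 \<and> (1 - \<epsilon>') powr - \<alpha> \<le> 1 + \<eta> \<and> 1 - \<eta> \<le> (1 + \<epsilon>') powr - \<alpha>"
proof -
  have "(\<lambda>c::real. c powr - \<alpha>) \<midarrow>1\<rightarrow> 1 powr - \<alpha>"
    by (intro tendsto_intros) auto
  then have "(\<lambda>c::real. c powr - \<alpha>) \<midarrow>1\<rightarrow> 1" by simp
  from LIM_D[OF this \<eta>] obtain d where d: "d > 0" and
    dd: "\<And>c. c \<noteq> 1 \<and> norm (c - 1) < d \<Longrightarrow> norm (c powr - \<alpha> - 1) < \<eta>" by blast
  define e where "e = min (d / 2) (1 / 2)"
  have e: "0 < e" "e \<le> 1/2" "e < d" unfolding e_def using d by auto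
  have "norm ((1 - e) powr - \<alpha> - 1) < \<eta>" using e by (intro dd) auto
  moreover have "norm ((1 + e) powr - \<alpha> - 1) < \<eta>" using e by (intro dd) auto
  ultimately show ?thesis using e by (intro exI[of _ e]) auto
qed

lemma b_bound:
  assumes C: "C > 0" and pot: "\<And>u. u \<ge> 1 \<Longrightarrow> F (x2 / u) \<le> C * u powr (\<alpha> + 1) * F x2"
    and x2: "x2 > 0"
  defines "\<tau> \<equiv> sqrt s powr (1 / (\<alpha> + 1))"
  shows "0 < \<tau>" "\<tau> < 1"
    and "\<rho> ^ Suc (max k m) * F (x2 * (1 - \<tau>) * \<tau> ^ k) \<le> s ^ m * (C * (1 / (1 - \<tau>)) powr (\<alpha> + 1) * F x2) * sqrt s ^ k"
proof -
  have ss: "0 < sqrt s" "sqrt s < 1" using s_bounds by auto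
  have a1: "\<alpha> + 1 > 0" using alpha by simp
  show tp: "0 < \<tau>" unfolding \<tau>_def using ss by simp
  show t1: "\<tau> < 1" unfolding \<tau>_def using ss a1 by (simp add: powr01_less_one)
  have tb: "\<tau> powr (\<alpha> + 1) = sqrt s" unfolding \<tau>_def using ss a1 by (simp add: powr_powr)
  define u where "u = 1 / ((1 - \<tau>) * \<tau> ^ k)"
  have den: "0 < (1 - \<tau>) * \<tau> ^ k" "(1 - \<tau>) * \<tau> ^ k \<le> 1"
    using tp t1 by (auto intro!: mult_le_one power_le_one)
  have u1: "u \<ge> 1" unfolding u_def using den by simp
  have xu: "x2 * (1 - \<tau>) * \<tau> ^ k = x2 / u" unfolding u_def by simp
  have ueq: "u = (1 / (1 - \<tau>)) / \<tau> ^ k" unfolding u_def by simp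
  have "u powr (\<alpha> + 1) = (1 / (1 - \<tau>)) powr (\<alpha> + 1) / (\<tau> ^ k) powr (\<alpha> + 1)"
    unfolding ueq using tp t1 by (intro powr_divide)
  also have "(\<tau> ^ k) powr (\<alpha> + 1) = sqrt s ^ k"
    using tp by (simp add: powr_realpow[symmetric] powr_powr mult.commute tb[symmetric] powr_powr)
  finally have up: "u powr (\<alpha> + 1) = (1 / (1 - \<tau>)) powr (\<alpha> + 1) / sqrt s ^ k" .
  have F1: "F (x2 * (1 - \<tau>) * \<tau> ^ k) \<le> C * ((1 / (1 - \<tau>)) powr (\<alpha> + 1) / sqrt s ^ k) * F x2"
    using pot[OF u1] unfolding xu up .
  have \<rho>s: "\<rho> ^ Suc (max k m) \<le> s ^ k * s ^ m"
  proof (cases "k \<le> m")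
    case True then show ?thesis using \<rho>_pow_s[of k m] by (simp add: max_def)
  next
    case False then show ?thesis using \<rho>_pow_s[of m k] by (simp add: max_def mult.commute)
  qed
  have "\<rho> ^ Suc (max k m) * F (x2 * (1 - \<tau>) * \<tau> ^ k) \<le> (s ^ k * s ^ m) * (C * ((1 / (1 - \<tau>)) powr (\<alpha> + 1) / sqrt s ^ k) * F x2)"
    using \<rho>s F1 F_nonneg \<rho>_bounds s_bounds by (intro mult_mono) auto
  also have "s ^ k = sqrt s ^ k * sqrt s ^ k" using s_bounds by (simp add: power_mult_distrib[symmetric])
  also have "(sqrt s ^ k * sqrt s ^ k * s ^ m) * (C * ((1 / (1 - \<tau>)) powr (\<alpha> + 1) / sqrt s ^ k) * F x2)
     = s ^ m * (C * (1 / (1 - \<tau>)) powr (\<alpha> + 1) * F x2) * sqrt s ^ k"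
    using ss by (simp add: field_simps)
  finally show "\<rho> ^ Suc (max k m) * F (x2 * (1 - \<tau>) * \<tau> ^ k) \<le> s ^ m * (C * (1 / (1 - \<tau>)) powr (\<alpha> + 1) * F x2) * sqrt s ^ k" .
qed

end


context rmodel begin

lemma main:
  "\<forall>\<epsilon>>0. \<exists>x0. \<forall>x1 x2. x0 \<le> x1 \<and> x1 \<le> x2 \<longrightarrow>
     \<bar>Psi_max M r (c1 / (r * \<delta>1)) (c2 / (r * \<delta>2)) W \<sigma> x1 x2 T
       / (lam * T * measure M {\<omega> \<in> space M. exp (- r * V \<omega>) * \<sigma> 0 \<omega> > x2}) - 1\<bar> < \<epsilon>"
proof (intro allI impI)
  fix \<epsilon> :: real assume \<epsilon>: "\<epsilon> > 0"
  define \<epsilon>0 where "\<epsilon>0 = min \<epsilon> 1"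
  define \<eta> where "\<eta> = \<epsilon>0 / 8"
  have \<eta>: "0 < \<eta>" "\<eta> \<le> 1/8" "5 * \<eta> < \<epsilon>" unfolding \<eta>_def \<epsilon>0_def using \<epsilon> by auto
  obtain \<epsilon>' where e': "0 < \<epsilon>'" "\<epsilon>' \<le> 1/2" "(1 - \<epsilon>') powr - \<alpha> \<le> 1 + \<eta>" "1 - \<eta> \<le> (1 + \<epsilon>') powr - \<alpha>"
    using powr_near1[OF \<eta>(1)] by blast
  obtain za where za: "za > 0" "\<And>y. y \<ge> za \<Longrightarrow> I ((1 - \<epsilon>') * y) \<le> (1 + \<eta>) * (1 - \<epsilon>') powr - \<alpha> * I y"
    using I_ratio_bounds[of "1 - \<epsilon>'" \<eta>] e' \<eta> by auto
  obtain zb where zb: "zb > 0" "\<And>y. y \<ge> zb \<Longrightarrow> (1 - \<eta>) * (1 + \<epsilon>') powr - \<alpha> * I y \<le> I ((1 + \<epsilon>') * y)"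
    using I_ratio_bounds[of "1 + \<epsilon>'" \<eta>] e' \<eta> by auto
  define q where "q = exp (r * T)"
  have q: "q \<ge> 1" unfolding q_def using r T by simp
  obtain zq where zq: "zq > 0" "\<And>z. z \<ge> zq \<Longrightarrow> F z > 0 \<and> (1 - 1/2) * q powr - \<alpha> * F z \<le> F (q * z)"
    using F_ratio_bounds[of q "1/2"] q by auto
  define G where "G = 2 * q powr \<alpha>"
  have Gpos: "G > 0" unfolding G_def using q by simp
  have FG: "F z \<le> G * F (q * z)" if "z \<ge> zq" for z
  proof -
    have "(1/2) * q powr - \<alpha> * F z \<le> F (q * z)" using zq(2)[OF that] by simp
    then have "G * ((1/2) * q powr - \<alpha> * F z) \<le> G * F (q * z)" using Gpos by simp
    moreover have "G * ((1/2) * q powr - \<alpha> * F z) = F z" unfolding G_def using q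
      by (simp add: powr_minus field_simps)
    ultimately show ?thesis by metis
  qed
  obtain C z1 where C: "C > 0" "z1 > 0" and pot: "\<And>x u. x \<ge> z1 \<Longrightarrow> u \<ge> 1 \<Longrightarrow> F (x / u) \<le> C * u powr (\<alpha> + 1) * F x"
    using potter by blast
  define \<tau> where "\<tau> = sqrt s powr (1 / (\<alpha> + 1))"
  have \<tau>: "0 < \<tau>" "\<tau> < 1" using b_bound(1,2)[OF C(1) pot C(2)] unfolding \<tau>_def by (auto simp: order.refl)
  have ss: "0 < sqrt s" "sqrt s < 1" using s_bounds by auto
  define X where "X = C * (1 / (1 - \<tau>)) powr (\<alpha> + 1)"
  have Xpos: "X > 0" unfolding X_def using C \<tau> by simp
  define K3 where "K3 = X * G / ((1 - sqrt s) * lam * T)"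
  have K3pos: "K3 > 0" unfolding K3_def using Xpos Gpos ss lam T by simp
  obtain n where n: "s ^ n < \<eta> / K3" using real_arch_pow_inv[of "\<eta> / K3" s] \<eta> K3pos s_bounds by auto
  define m where "m = max n 1"
  have m: "m \<ge> 1" unfolding m_def by simp
  have smK: "s ^ m * K3 \<le> \<eta>"
  proof -
    have "s ^ m \<le> s ^ n" unfolding m_def using s_bounds by (intro power_decreasing) auto
    then have "s ^ m < \<eta> / K3" using n by simp
    then show ?thesis using K3pos by (simp add: field_simps)
  qed
  define a where "a = \<epsilon>' / real m"
  have apos: "a > 0" unfolding a_def using e' m by simp
  obtain zc where zc: "zc > 0" "\<And>w. w \<ge> zc \<Longrightarrow> (1 - 1/2) * (q / a) powr - \<alpha> * F w \<le> F ((q / a) * w)"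
    using F_ratio_bounds[of "q / a" "1/2"] q apos by auto
  define G2 where "G2 = 2 * (q / a) powr \<alpha>"
  have G2pos: "G2 > 0" unfolding G2_def using q apos by simp
  have FG2: "F w \<le> G2 * F ((q / a) * w)" if "w \<ge> zc" for w
  proof -
    have "(1/2) * (q / a) powr - \<alpha> * F w \<le> F ((q / a) * w)" using zc(2)[OF that] by simp
    then have "G2 * ((1/2) * (q / a) powr - \<alpha> * F w) \<le> G2 * F ((q / a) * w)" using G2pos by simp
    moreover have "G2 * ((1/2) * (q / a) powr - \<alpha> * F w) = F w" unfolding G2_def using q apos
      by (simp add: powr_minus field_simps)
    ultimately show ?thesis by metis
  qed
  define \<kappa>1 where "\<kappa>1 = \<eta> * lam * T / (real m * real m * G2)"
  have \<kappa>1: "\<kappa>1 > 0" unfolding \<kappa>1_def using \<eta> lam T m G2pos by simp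
  obtain zF where zF: "\<And>w. w \<ge> zF \<Longrightarrow> F w < \<kappa>1"
    using order_tendstoD(2)[OF F_tendsto0 \<kappa>1] unfolding eventually_at_top_linorder by blast
  define \<kappa>2 where "\<kappa>2 = \<eta> * lam * T * (1 - s) * (1 - s) / G"
  have \<kappa>2: "\<kappa>2 > 0" unfolding \<kappa>2_def using \<eta> lam T s_bounds Gpos by simp
  obtain zF2 where zF2: "\<And>w. w \<ge> zF2 \<Longrightarrow> F w < \<kappa>2"
    using order_tendstoD(2)[OF F_tendsto0 \<kappa>2] unfolding eventually_at_top_linorder by blast
  define x0 where "x0 = max 1 (max za (max zb (max zq (max z1 (max (p1 / \<epsilon>') (max (zc / a) (max (zF / a) zF2)))))))"
  have x0: "1 \<le> x0" "za \<le> x0" "zb \<le> x0" "zq \<le> x0" "z1 \<le> x0" "p1 / \<epsilon>' \<le> x0" "zc / a \<le> x0" "zF / a \<le> x0" "zF2 \<le> x0"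
    unfolding x0_def by (simp_all only: max.cobounded1 max.coboundedI2)
  show "\<exists>x0. \<forall>x1 x2. x0 \<le> x1 \<and> x1 \<le> x2 \<longrightarrow>
     \<bar>Psi_max M r (c1 / (r * \<delta>1)) (c2 / (r * \<delta>2)) W \<sigma> x1 x2 T
       / (lam * T * measure M {\<omega> \<in> space M. exp (- r * V \<omega>) * \<sigma> 0 \<omega> > x2}) - 1\<bar> < \<epsilon>"
  proof (intro exI[of _ x0] allI impI, elim conjE)
    fix x1 x2 assume x01: "x0 \<le> x1" and x12: "x1 \<le> x2"
    have x1pos: "0 < x1" using x0 x01 by simp
    have x2pos: "0 < x2" using x1pos x12 by simp
    have xge: "za \<le> x2" "zb \<le> x2" "zq \<le> x2" "z1 \<le> x2" "p1 / \<epsilon>' \<le> x2" "zc / a \<le> x2" "zF / a \<le> x2" "zF2 \<le> x2"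
      using x0 x01 x12 by linarith+
    have "x2 \<le> q * x2" using q x2pos by simp
    then have qx2: "q * x2 \<ge> zq" using xge by linarith
    have Fq: "F (q * x2) > 0" using zq(2)[OF qx2] by simp
    have Ige: "T * F (q * x2) \<le> I x2" using I_ge[of x2] x2pos unfolding q_def by (simp add: mult.commute)
    define D where "D = lam * I x2"
    have Dge: "lam * T * F (q * x2) \<le> D" unfolding D_def using Ige lam by (simp add: mult.assoc)
    have "lam * T * F (q * x2) > 0" using lam T Fq by simp
    then have Dpos: "D > 0" using Dge by linarith
    have den: "lam * T * measure M {\<omega> \<in> space M. exp (- r * V \<omega>) * \<sigma> 0 \<omega> > x2} = D"
      unfolding D_def den_eq[OF x2pos] using T by simp
    have Psi: "Psi_max M r (c1 / (r * \<delta>1)) (c2 / (r * \<delta>2)) W \<sigma> x1 x2 T = prob (Rset x1 x2)"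
      by (rule Psi_eq)
    define b where "b k = s ^ m * (X * F x2) * sqrt s ^ k" for k
    have bb: "\<rho> ^ Suc (max k m) * F (x2 * (1 - \<tau>) * \<tau> ^ k) \<le> b k" for k
      using b_bound(3)[OF C(1) pot x2pos, of k m] xge(4) unfolding b_def X_def \<tau>_def by (simp add: mult.assoc)
    have bs: "b sums (s ^ m * (X * F x2) * (1 / (1 - sqrt s)))"
      unfolding b_def by (intro sums_mult geometric_sums) (use ss in auto)
    have e'1: "0 < \<epsilon>'" "\<epsilon>' < 1" using e' by auto
    have UB1: "prob (Rset x1 x2) \<le> lam * I ((1 - \<epsilon>') * x2) + real m * real m * (F (\<epsilon>' * x2 / m) * F (\<epsilon>' * x2 / m)) + suminf b"
      by (rule UB[OF x1pos x12 e'1 m \<tau> bb]) (use bs in \<open>simp add: sums_summable\<close>)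
    have t1: "lam * I ((1 - \<epsilon>') * x2) \<le> (1 + 3 * \<eta>) * D"
    proof -
      have "I ((1 - \<epsilon>') * x2) \<le> (1 + \<eta>) * (1 - \<epsilon>') powr - \<alpha> * I x2" by (rule za(2)[OF xge(1)])
      also have "\<dots> \<le> (1 + \<eta>) * (1 + \<eta>) * I x2"
        using e'(3) \<eta> I_nonneg[of x2] by (intro mult_right_mono mult_left_mono) auto
      also have "\<dots> \<le> (1 + 3 * \<eta>) * I x2"
        using \<eta> I_nonneg[of x2] by (intro mult_right_mono) (auto simp: algebra_simps power2_eq_square)
      finally show ?thesis unfolding D_def using lam by (simp add: mult_left_mono mult.left_commute)
    qed
    have t2: "real m * real m * (F (\<epsilon>' * x2 / m) * F (\<epsilon>' * x2 / m)) \<le> \<eta> * D"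
    proof -
      have w: "\<epsilon>' * x2 / m = a * x2" unfolding a_def by simp
      have wc: "a * x2 \<ge> zc" "a * x2 \<ge> zF" using xge(6,7) apos by (auto simp: field_simps)
      have f1: "F (a * x2) \<le> G2 * F (q * x2)" using FG2[OF wc(1)] apos by simp
      have f2: "F (a * x2) \<le> \<kappa>1" using zF[OF wc(2)] by simp
      have "F (a * x2) * F (a * x2) \<le> \<kappa>1 * (G2 * F (q * x2))"
        using f1 f2 F_nonneg \<kappa>1 by (intro mult_mono) auto
      then have "real m * real m * (F (a * x2) * F (a * x2)) \<le> real m * real m * (\<kappa>1 * (G2 * F (q * x2)))"
        by (intro mult_left_mono) auto
      also have "\<dots> = \<eta> * (lam * T * F (q * x2))" unfolding \<kappa>1_def using m G2pos by (simp add: field_simps)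
      also have "\<dots> \<le> \<eta> * D" using Dge \<eta> by (intro mult_left_mono) auto
      finally show ?thesis unfolding w .
    qed
    have t3: "suminf b \<le> \<eta> * D"
    proof -
      have "suminf b = s ^ m * (X * F x2) * (1 / (1 - sqrt s))" using bs by (simp add: sums_iff)
      also have "\<dots> \<le> s ^ m * (X * (G * F (q * x2))) * (1 / (1 - sqrt s))"
        using FG[OF xge(3)] Xpos ss s_bounds by (intro mult_right_mono mult_left_mono) auto
      also have "\<dots> = (s ^ m * K3) * (lam * T * F (q * x2))"
        unfolding K3_def using ss lam T by (simp add: field_simps)
      also have "\<dots> \<le> \<eta> * (lam * T * F (q * x2))"
        using smK lam T F_nonneg by (intro mult_right_mono) auto
      also have "\<dots> \<le> \<eta> * D" using Dge \<eta> by (intro mult_left_mono) auto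
      finally show ?thesis .
    qed
    have "(1 + 5 * \<eta>) * D < (1 + \<epsilon>) * D" by (rule mult_strict_right_mono) (use \<eta> Dpos in auto)
    moreover have "(1 + 3 * \<eta>) * D + \<eta> * D + \<eta> * D = (1 + 5 * \<eta>) * D" by (simp add: algebra_simps)
    ultimately have upper: "prob (Rset x1 x2) < (1 + \<epsilon>) * D"
      using UB1 t1 t2 t3 by linarith
    have LB1: "lam * I (x2 + p1) - F (x2 + p1) * F (x2 + p1) * (1 / (1 - s)) * (1 / (1 - s)) \<le> prob (Rset x1 x2)"
      by (rule LB[OF x1pos x12])
    have l1: "(1 - 2 * \<eta>) * D \<le> lam * I (x2 + p1)"
    proof -
      have "p1 \<le> \<epsilon>' * x2" using mult_right_mono[OF xge(5), of \<epsilon>'] e'(1) by (simp add: mult.commute)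
      then have "I ((1 + \<epsilon>') * x2) \<le> I (x2 + p1)"
        using x2pos p_pos by (intro I_antimono) (auto simp: algebra_simps)
      moreover have "(1 - \<eta>) * (1 + \<epsilon>') powr - \<alpha> * I x2 \<le> I ((1 + \<epsilon>') * x2)" by (rule zb(2)[OF xge(2)])
      moreover have "(1 - \<eta>) * (1 - \<eta>) * I x2 \<le> (1 - \<eta>) * (1 + \<epsilon>') powr - \<alpha> * I x2"
        using e'(4) \<eta> I_nonneg[of x2] by (intro mult_right_mono mult_left_mono) auto
      moreover have "(1 - 2 * \<eta>) * I x2 \<le> (1 - \<eta>) * (1 - \<eta>) * I x2"
        using I_nonneg[of x2] by (intro mult_right_mono) (auto simp: algebra_simps)
      ultimately have "(1 - 2 * \<eta>) * I x2 \<le> I (x2 + p1)" by linarith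
      then show ?thesis unfolding D_def using lam by (simp add: mult.left_commute)
    qed
    have l2: "F (x2 + p1) * F (x2 + p1) * (1 / (1 - s)) * (1 / (1 - s)) \<le> \<eta> * D"
    proof -
      have f0: "F (x2 + p1) \<le> F x2" using p_pos by (intro F_antimono) simp
      have f1: "F x2 \<le> G * F (q * x2)" by (rule FG[OF xge(3)])
      have f2: "F x2 \<le> \<kappa>2" using zF2[OF xge(8)] by simp
      have "F (x2 + p1) * F (x2 + p1) \<le> \<kappa>2 * (G * F (q * x2))"
        using f0 f1 f2 F_nonneg by (intro mult_mono) (auto intro: order_trans)
      then have "F (x2 + p1) * F (x2 + p1) * (1 / (1 - s)) * (1 / (1 - s)) \<le> \<kappa>2 * (G * F (q * x2)) * (1 / (1 - s)) * (1 / (1 - s))"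
        using s_bounds by (intro mult_right_mono) auto
      also have "\<dots> = \<eta> * (lam * T * F (q * x2))"
      proof -
        have "\<forall>u>0. (\<eta> * lam * T * u * u / G) * (G * F (q * x2)) * (1 / u) * (1 / u) = \<eta> * (lam * T * F (q * x2))"
          using Gpos by (simp add: field_simps)
        then show ?thesis unfolding \<kappa>2_def using s_bounds by simp
      qed
      also have "\<dots> \<le> \<eta> * D" using Dge \<eta> by (intro mult_left_mono) auto
      finally show ?thesis .
    qed
    have "(1 - \<epsilon>) * D < (1 - 3 * \<eta>) * D" by (rule mult_strict_right_mono) (use \<eta> Dpos in auto)
    moreover have "(1 - 2 * \<eta>) * D - \<eta> * D = (1 - 3 * \<eta>) * D" by (simp add: algebra_simps)
    ultimately have lower: "(1 - \<epsilon>) * D < prob (Rset x1 x2)"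
      using LB1 l1 l2 by linarith
    have "\<bar>prob (Rset x1 x2) / D - 1\<bar> < \<epsilon>"
      using upper lower Dpos by (simp add: abs_less_iff field_simps)
    then show "\<bar>Psi_max M r (c1 / (r * \<delta>1)) (c2 / (r * \<delta>2)) W \<sigma> x1 x2 T
       / (lam * T * measure M {\<omega> \<in> space M. exp (- r * V \<omega>) * \<sigma> 0 \<omega> > x2}) - 1\<bar> < \<epsilon>"
      unfolding Psi den .
  qed
qed

end

theorem theorem3p1:
  fixes M :: "'a measure"
    and W \<sigma> :: "nat \<Rightarrow> 'a \<Rightarrow> real"
    and V :: "'a \<Rightarrow> real"
    and r c1 c2 \<delta>1 \<delta>2 lam T \<alpha> :: real
    and L :: "real \<Rightarrow> real"
  assumes M: "prob_space M"
    and r: "r > 0" and c: "c1 > 0" "c2 > 0"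
    and \<delta>: "0 < \<delta>1" "\<delta>1 < 1" "0 < \<delta>2" "\<delta>2 < 1" "\<delta>1 + \<delta>2 = 1"
    and p_order: "c1 / \<delta>1 > c2 / \<delta>2"
    and lam: "lam > 0"
    and T: "T > 0"
    \<comment> \<open>W k (inter-arrival times) and \<sigma> k (claims) all mutually independent\<close>
    and indep: "prob_space.indep_vars M (\<lambda>_. borel)
                  (\<lambda>j. case j of Inl k \<Rightarrow> W k | Inr k \<Rightarrow> \<sigma> k) UNIV"
    and W_exp: "\<And>k. distributed M lborel (W k) (exponential_density lam)"
    and \<sigma>_meas: "\<And>k. \<sigma> k \<in> borel_measurable M"
    and \<sigma>_ident: "\<And>k. distr M borel (\<sigma> k) = distr M borel (\<sigma> 0)"
    and \<sigma>_nonneg: "\<And>k \<omega>. \<omega> \<in> space M \<Longrightarrow> \<sigma> k \<omega> \<ge> 0"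
    and alpha: "\<alpha> > 0"
    and L_cont: "continuous_on {0<..} L"
    and L_sv: "slowly_varying L"
    and L_inf: "filterlim L at_top at_top"
    and tail: "\<And>k x. x > 0 \<Longrightarrow>
                 measure M {\<omega> \<in> space M. \<sigma> k \<omega> > x} = L x / x powr \<alpha>"
    and V_unif: "distr M borel V = uniform_measure lborel {0<..T}"
    and V_meas: "V \<in> borel_measurable M"
    and V_indep: "prob_space.indep_var M borel V borel (\<sigma> 0)"
  shows "\<forall>\<epsilon>>0. \<exists>x0. \<forall>x1 x2. x0 \<le> x1 \<and> x1 \<le> x2 \<longrightarrow>
           \<bar>Psi_max M r (c1 / (r * \<delta>1)) (c2 / (r * \<delta>2)) W \<sigma> x1 x2 T
             / (lam * T * measure M {\<omega> \<in> space M. exp (- r * V \<omega>) * \<sigma> 0 \<omega> > x2}) - 1\<bar> < \<epsilon>"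
proof -
  interpret rmodel M W \<sigma> V r c1 c2 \<delta>1 \<delta>2 lam T \<alpha> L
    by (intro rmodel.intro rmodel_axioms.intro M)
       (use r c \<delta> p_order lam T indep W_exp \<sigma>_meas \<sigma>_nonneg alpha L_sv L_inf tail V_unif V_meas V_indep in auto)
  show ?thesis by (rule main)
qed

end
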